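(* Fix a stage $t<\ell$ and a sub-stage $i\in\{1,2\}$ at stage $t$, with $\Omega_1=\mathcal S\times\mathcal H_{1,t}$ and $\Omega_2=\mathcal S\times\mathcal H_{1,t}\times\mathcal A_1$. For each player-1 continuation policy $\pi_1$ from sub-stage $(i,t)$, let $\Gamma_2^{\pi_1}\subset\mathbb R^{\Omega_i}$ be the finite set of value vectors $\alpha^{\pi_1,\kappa}$ over all deterministic player-2 continuation trees $\kappa$, and let $\Gamma_1=\{\Gamma_2^{\pi_1}:\pi_1\}$ be the family of these sets (representing the player-1 continuations). Then for every sequential occupancy state $x_i$ at sub-stage $(i,t)$, \[ v^*_{\mathrm{seq}}(x_i)=\max_{\Gamma_2\in\Gamma_1}\mathtt{Val}_{\Gamma_2}(x_i),\qquad \mathtt{Val}_{\Gamma_2}(x_i)=\sum_{h_2\in\mathcal H_{2,t}}\min_{\alpha\in\Gamma_2}\langle b_{h_2},\alpha\rangle . \]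
   Context: A finite-horizon two-player zero-sum partially observable stochastic game consists of finite sets $\mathcal S,\mathcal A_1,\mathcal A_2,\mathcal Z_1,\mathcal Z_2$, a kernel $p(s',z_1,z_2\mid s,a_1,a_2)$, reward $r(s,a_1,a_2)$ to player 1 (maximiser) paid by player 2 (minimiser), initial $b\in\Delta(\mathcal S)$, discount $\gamma\in[0,1)$, horizon $\ell$. Player $i$'s private history at stage $t$ is $h_{i,t}=(a_{i,0},z_{i,1},\dots,a_{i,t-1},z_{i,t})\in\mathcal H_{i,t}$; $h\cdot a\cdot z$ denotes appending. Decision rules $d_{i,t}:\mathcal H_{i,t}\to\Delta(\mathcal A_i)$ form $\mathcal D_{i,t}$. Sub-stages $(1,t),(2,t)$ for $t<\ell$, terminal $(1,\ell)$. Sequential occupancy states: $x_{1,t}\in\Delta(\mathcal S\times\mathcal H_{1,t}\times\mathcal H_{2,t})$, $x_{2,t}\in\Delta(\mathcal S\times\mathcal H_{1,t}\times\mathcal H_{2,t}\times\mathcal A_1)$. Transitions/rewards: $\tau_{\mathrm{seq}}(x_{1,t},d_{1,t})(s,h_1,h_2,a_1)=x_{1,t}(s,h_1,h_2)d_{1,t}(a_1\mid h_1)$, $\rho_{\mathrm{seq}}(x_{1,t},d_{1,t})=0$; $\tau_{\mathrm{seq}}(x_{2,t},d_{2,t})(s',h_1\cdot a_1\cdot z_1,h_2\cdot a_2\cdot z_2)=\sum_s x_{2,t}(s,h_1,h_2,a_1)d_{2,t}(a_2\mid h_2)p(s',z_1,z_2\mid s,a_1,a_2)$, $\rho_{\mathrm{seq}}(x_{2,t},d_{2,t})=\sum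 x_{2,t}(s,h_1,h_2,a_1)d_{2,t}(a_2\mid h_2)r(s,a_1,a_2)$. The optimal sequential value $v^*_{\mathrm{seq}}$ is defined by backward recursion: $v^*_{\mathrm{seq}}(x_{1,\ell})=0$, $v^*_{\mathrm{seq}}(x_{2,t})=\min_{d_{2,t}}[\rho_{\mathrm{seq}}(x_{2,t},d_{2,t})+\gamma v^*_{\mathrm{seq}}(\tau_{\mathrm{seq}}(x_{2,t},d_{2,t}))]$, $v^*_{\mathrm{seq}}(x_{1,t})=\max_{d_{1,t}}v^*_{\mathrm{seq}}(\tau_{\mathrm{seq}}(x_{1,t},d_{1,t}))$. Local beliefs: for an occupancy $x_i$ at $(i,t)$ and $h_2\in\mathcal H_{2,t}$, $b_{h_2}\in\mathbb R_+^{\Omega_i}$ is the unnormalised slice $b_{h_2}(\omega)=x_i(\omega,h_2)$. A player-1 continuation policy from $(1,t)$ is a sequence $(d_{1,t},\dots,d_{1,\ell-1})$ and from $(2,t)$ is $(d_{1,t+1},\dots,d_{1,\ell-1})$. A deterministic player-2 continuation tree $\kappa$ from stage $t$ assigns an action in $\mathcal A_2$ to each sequence of player-2 actions and observations occurring after stage $t$ (the current history being the root). The value vector $\alpha^{\pi_1,\kappa}\in\mathbb R^{\Omega_i}$ is given by $\alpha^{\pi_1,\kappa}(\omega)=\mathbb E[\sum_{k=t}^{\ell-1}\gamma^{k-t}r(s_k,a_{1,k},a_{2,k})]$ conditional on the current state and player-1 history (and, when $i=2$, player 1's current action $a_{1,t}$) being $\omega$, when player 1 follows $\pi_1$ and player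 2 follows $\kappa$. *)

theory Defs
  imports "HOL-Analysis.Analysis"
begin

text \<open>Game data passed explicitly:
  kernel p s a1 a2 (s', z1, z2) = p(s',z1,z2 | s,a1,a2), reward r s a1 a2, discount g,
  horizon l. Private histories are lists of (action, observation) pairs; appending
  h . a . z is h @ [(a,z)].\<close>

definition hist :: "nat \<Rightarrow> 'x list set" where
  "hist t = {h. length h = t}"

text \<open>Decision rules h \<mapsto> distribution over actions (defined on all histories;
  only the values on stage-t histories matter).\<close>
definition decision_rules :: "('h \<Rightarrow> 'a::finite \<Rightarrow> real) set" where
  "decision_rules = {d. \<forall>h. (\<forall>a. 0 \<le> d h a) \<and> sum (d h) UNIV = 1}"

definition occ1 :: "nat \<Rightarrow> ('s::finite \<times> 'h1 list \<times> 'h2 list \<Rightarrow> real) set" where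
  "occ1 t = {x. (\<forall>w. 0 \<le> x w)
              \<and> (\<forall>s h1 h2. x (s, h1, h2) \<noteq> 0 \<longrightarrow> length h1 = t \<and> length h2 = t)
              \<and> sum x (UNIV \<times> hist t \<times> hist t) = 1}"

definition occ2 :: "nat \<Rightarrow> ('s::finite \<times> 'h1 list \<times> 'h2 list \<times> 'a1::finite \<Rightarrow> real) set" where
  "occ2 t = {x. (\<forall>w. 0 \<le> x w)
              \<and> (\<forall>s h1 h2 a1. x (s, h1, h2, a1) \<noteq> 0 \<longrightarrow> length h1 = t \<and> length h2 = t)
              \<and> sum x (UNIV \<times> hist t \<times> hist t \<times> UNIV) = 1}"

definition tau1 ::
  "('s \<times> ('a1 \<times> 'z1) list \<times> 'h2 \<Rightarrow> real) \<Rightarrow> (('a1 \<times> 'z1) list \<Rightarrow> 'a1 \<Rightarrow> real)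
   \<Rightarrow> ('s \<times> ('a1 \<times> 'z1) list \<times> 'h2 \<times> 'a1 \<Rightarrow> real)" where
  "tau1 x d = (\<lambda>(s, h1, h2, a1). x (s, h1, h2) * d h1 a1)"

definition tau2 ::
  "('s::finite \<Rightarrow> 'a1 \<Rightarrow> 'a2 \<Rightarrow> 's \<times> 'z1 \<times> 'z2 \<Rightarrow> real)
   \<Rightarrow> ('s \<times> ('a1 \<times> 'z1) list \<times> ('a2 \<times> 'z2) list \<times> 'a1 \<Rightarrow> real)
   \<Rightarrow> (('a2 \<times> 'z2) list \<Rightarrow> 'a2 \<Rightarrow> real)
   \<Rightarrow> ('s \<times> ('a1 \<times> 'z1) list \<times> ('a2 \<times> 'z2) list \<Rightarrow> real)" where
  "tau2 p x d = (\<lambda>(s', h1', h2').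
     if h1' \<noteq> [] \<and> h2' \<noteq> [] then
       (\<Sum>s\<in>UNIV. x (s, butlast h1', butlast h2', fst (last h1'))
                  * d (butlast h2') (fst (last h2'))
                  * p s (fst (last h1')) (fst (last h2')) (s', snd (last h1'), snd (last h2')))
     else 0)"

definition rho2 ::
  "('s::finite \<Rightarrow> 'a1::finite \<Rightarrow> 'a2::finite \<Rightarrow> real) \<Rightarrow> nat
   \<Rightarrow> ('s \<times> ('a1 \<times> 'z1) list \<times> ('a2 \<times> 'z2) list \<times> 'a1 \<Rightarrow> real)
   \<Rightarrow> (('a2 \<times> 'z2) list \<Rightarrow> 'a2 \<Rightarrow> real) \<Rightarrow> real" where
  "rho2 r t x d = (\<Sum>(s, h1, h2, a1) \<in> UNIV \<times> hist t \<times> hist t \<times> UNIV.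
                     \<Sum>a2\<in>UNIV. x (s, h1, h2, a1) * d h2 a2 * r s a1 a2)"

text \<open>V1 p r g n t x: optimal sequential value of occupancy x at sub-stage (1,t)
  with n stages remaining (n = l - t). Max/min over decision rules rendered as SUP/INF.\<close>
primrec V1 ::
  "('s::finite \<Rightarrow> 'a1::finite \<Rightarrow> 'a2::finite \<Rightarrow> 's \<times> 'z1 \<times> 'z2 \<Rightarrow> real)
   \<Rightarrow> ('s \<Rightarrow> 'a1 \<Rightarrow> 'a2 \<Rightarrow> real) \<Rightarrow> real \<Rightarrow> nat \<Rightarrow> nat
   \<Rightarrow> ('s \<times> ('a1 \<times> 'z1) list \<times> ('a2 \<times> 'z2) list \<Rightarrow> real) \<Rightarrow> real" where
  "V1 p r g 0 t x = 0"
| "V1 p r g (Suc n) t x =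
     (SUP d1\<in>decision_rules. INF d2\<in>decision_rules.
        rho2 r t (tau1 x d1) d2 + g * V1 p r g n (Suc t) (tau2 p (tau1 x d1) d2))"

definition vseq1 ::
  "('s::finite \<Rightarrow> 'a1::finite \<Rightarrow> 'a2::finite \<Rightarrow> 's \<times> 'z1 \<times> 'z2 \<Rightarrow> real)
   \<Rightarrow> ('s \<Rightarrow> 'a1 \<Rightarrow> 'a2 \<Rightarrow> real) \<Rightarrow> real \<Rightarrow> nat \<Rightarrow> nat
   \<Rightarrow> ('s \<times> ('a1 \<times> 'z1) list \<times> ('a2 \<times> 'z2) list \<Rightarrow> real) \<Rightarrow> real" where
  "vseq1 p r g l t x = V1 p r g (l - t) t x"

definition vseq2 ::
  "('s::finite \<Rightarrow> 'a1::finite \<Rightarrow> 'a2::finite \<Rightarrow> 's \<times> 'z1 \<times> 'z2 \<Rightarrow> real)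
   \<Rightarrow> ('s \<Rightarrow> 'a1 \<Rightarrow> 'a2 \<Rightarrow> real) \<Rightarrow> real \<Rightarrow> nat \<Rightarrow> nat
   \<Rightarrow> ('s \<times> ('a1 \<times> 'z1) list \<times> ('a2 \<times> 'z2) list \<times> 'a1 \<Rightarrow> real) \<Rightarrow> real" where
  "vseq2 p r g l t x = (INF d2\<in>decision_rules.
        rho2 r t x d2 + g * V1 p r g (l - Suc t) (Suc t) (tau2 p x d2))"

text \<open>Player-1 policies: pol k is the decision rule used at stage k.
  Deterministic player-2 continuation tree kappa: maps the sequence sg of player-2
  (action, observation) pairs occurring after the current stage to an action.
  A1 ... n t s h1 sg: expected discounted reward from sub-stage (1,t) with n stages
  remaining, state s, player-1 history h1, player-2 suffix sg.\<close>
primrec A1 ::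
  "('s::finite \<Rightarrow> 'a1::finite \<Rightarrow> 'a2 \<Rightarrow> 's \<times> 'z1::finite \<times> 'z2::finite \<Rightarrow> real)
   \<Rightarrow> ('s \<Rightarrow> 'a1 \<Rightarrow> 'a2 \<Rightarrow> real) \<Rightarrow> real
   \<Rightarrow> (nat \<Rightarrow> ('a1 \<times> 'z1) list \<Rightarrow> 'a1 \<Rightarrow> real) \<Rightarrow> (('a2 \<times> 'z2) list \<Rightarrow> 'a2)
   \<Rightarrow> nat \<Rightarrow> nat \<Rightarrow> 's \<Rightarrow> ('a1 \<times> 'z1) list \<Rightarrow> ('a2 \<times> 'z2) list \<Rightarrow> real" where
  "A1 p r g pol kappa 0 t s h1 sg = 0"
| "A1 p r g pol kappa (Suc n) t s h1 sg =
     (\<Sum>a1\<in>UNIV. pol t h1 a1 *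
        (r s a1 (kappa sg) + g *
           (\<Sum>ob\<in>UNIV. p s a1 (kappa sg) ob *
              A1 p r g pol kappa n (Suc t) (fst ob) (h1 @ [(a1, fst (snd ob))])
                 (sg @ [(kappa sg, snd (snd ob))]))))"

text \<open>Same, from sub-stage (2,t) after player 1 has played a1 (n stages remaining after t).\<close>
definition A2 ::
  "('s::finite \<Rightarrow> 'a1::finite \<Rightarrow> 'a2 \<Rightarrow> 's \<times> 'z1::finite \<times> 'z2::finite \<Rightarrow> real)
   \<Rightarrow> ('s \<Rightarrow> 'a1 \<Rightarrow> 'a2 \<Rightarrow> real) \<Rightarrow> real
   \<Rightarrow> (nat \<Rightarrow> ('a1 \<times> 'z1) list \<Rightarrow> 'a1 \<Rightarrow> real) \<Rightarrow> (('a2 \<times> 'z2) list \<Rightarrow> 'a2)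
   \<Rightarrow> nat \<Rightarrow> nat \<Rightarrow> 's \<Rightarrow> ('a1 \<times> 'z1) list \<Rightarrow> 'a1 \<Rightarrow> ('a2 \<times> 'z2) list \<Rightarrow> real" where
  "A2 p r g pol kappa n t s h1 a1 sg =
     r s a1 (kappa sg) + g *
       (\<Sum>ob\<in>UNIV. p s a1 (kappa sg) ob *
          A1 p r g pol kappa n (Suc t) (fst ob) (h1 @ [(a1, fst (snd ob))])
             (sg @ [(kappa sg, snd (snd ob))]))"

definition policies1 :: "(nat \<Rightarrow> ('a1 \<times> 'z1) list \<Rightarrow> 'a1::finite \<Rightarrow> real) set" where
  "policies1 = {pol. \<forall>k. pol k \<in> decision_rules}"

definition alpha1 where
  "alpha1 p r g l t pol kappa = (\<lambda>(s, h1). A1 p r g pol kappa (l - t) t s h1 [])"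

definition alpha2 where
  "alpha2 p r g l t pol kappa = (\<lambda>(s, h1, a1). A2 p r g pol kappa (l - Suc t) t s h1 a1 [])"

definition Gamma2_1 where "Gamma2_1 p r g l t pol = range (alpha1 p r g l t pol)"
definition Gamma2_2 where "Gamma2_2 p r g l t pol = range (alpha2 p r g l t pol)"
definition Gamma1_1 where "Gamma1_1 p r g l t = Gamma2_1 p r g l t ` policies1"
definition Gamma1_2 where "Gamma1_2 p r g l t = Gamma2_2 p r g l t ` policies1"

definition Val1 ::
  "nat \<Rightarrow> (('s::finite \<times> 'h1 list) \<Rightarrow> real) set \<Rightarrow> ('s \<times> 'h1 list \<times> 'h2 list \<Rightarrow> real) \<Rightarrow> real" where
  "Val1 t G x = (\<Sum>h2\<in>hist t. Min ((\<lambda>al. \<Sum>(s, h1)\<in>UNIV \<times> hist t. x (s, h1, h2) * al (s, h1)) ` G))"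

definition Val2 ::
  "nat \<Rightarrow> (('s::finite \<times> 'h1 list \<times> 'a1::finite) \<Rightarrow> real) set
   \<Rightarrow> ('s \<times> 'h1 list \<times> 'h2 list \<times> 'a1 \<Rightarrow> real) \<Rightarrow> real" where
  "Val2 t G x = (\<Sum>h2\<in>hist t.
      Min ((\<lambda>al. \<Sum>(s, h1, a1)\<in>UNIV \<times> hist t \<times> UNIV. x (s, h1, h2, a1) * al (s, h1, a1)) ` G))"

end

theory Submission
  imports Defs
begin


lemma cont_eval: "continuous_on UNIV (\<lambda>pol::nat \<Rightarrow> 'h \<Rightarrow> 'a \<Rightarrow> real. pol k h a)"
proof -
  have "continuous_on UNIV (\<lambda>pol::nat \<Rightarrow> 'h \<Rightarrow> 'a \<Rightarrow> real. pol k)" by simp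
  then have "continuous_on UNIV (\<lambda>pol::nat \<Rightarrow> 'h \<Rightarrow> 'a \<Rightarrow> real. pol k h)"
    by (rule continuous_on_product_then_coordinatewise)
  then show ?thesis by (rule continuous_on_product_then_coordinatewise)
qed

lemma A1_cont: "continuous_on UNIV (\<lambda>pol. A1 p r g pol \<kappa> n k s h1 sg)"
  by (induction n arbitrary: k s h1 sg) (auto intro!: continuous_intros cont_eval)

lemma compact_box: "compact (PiE UNIV (\<lambda>_::'a. S))" if "compact (S::'b::topological_space set)"
proof -
  have "compactin (product_topology (\<lambda>_::'a. euclidean) UNIV) (PiE UNIV (\<lambda>_::'a. S))"
    using that by (simp add: compactin_PiE)
  then show ?thesis by (simp add: euclidean_product_topology)
qed

lemma compact_policies: "compact (policies1 :: (nat \<Rightarrow> ('a1 \<times> 'z1) list \<Rightarrow> 'a1::finite \<Rightarrow> real) set)"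
proof -
  let ?K = "PiE UNIV (\<lambda>_::nat. PiE UNIV (\<lambda>_::('a1 \<times> 'z1) list. PiE UNIV (\<lambda>_::'a1. {0..1::real})))"
  have cK: "compact ?K" by (intro compact_box) auto
  have cl: "closed (policies1 :: (nat \<Rightarrow> ('a1 \<times> 'z1) list \<Rightarrow> 'a1::finite \<Rightarrow> real) set)"
  proof -
    have "policies1 = {pol :: nat \<Rightarrow> ('a1 \<times> 'z1) list \<Rightarrow> 'a1 \<Rightarrow> real. \<forall>k. \<forall>h. (\<forall>a. (\<lambda>_. 0) pol \<le> pol k h a) \<and> sum (pol k h) UNIV = (\<lambda>_. 1) pol}"
      by (auto simp: policies1_def decision_rules_def)
    also have "closed \<dots>"
      by (intro closed_Collect_all closed_Collect_conj closed_Collect_le closed_Collect_eq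
          continuous_intros cont_eval)
    finally show ?thesis .
  qed
  have sub: "policies1 \<subseteq> ?K"
  proof
    fix pol :: "nat \<Rightarrow> ('a1 \<times> 'z1) list \<Rightarrow> 'a1::finite \<Rightarrow> real"
    assume "pol \<in> policies1"
    then have d: "\<And>k h. (\<forall>a. 0 \<le> pol k h a) \<and> sum (pol k h) UNIV = 1"
      by (auto simp: policies1_def decision_rules_def)
    have "pol k h a \<le> 1" for k h a
    proof -
      have "pol k h a \<le> sum (pol k h) UNIV"
        using d[of k h] by (intro member_le_sum) auto
      then show ?thesis using d[of k h] by simp
    qed
    then show "pol \<in> ?K" using d by auto
  qed
  have "policies1 = ?K \<inter> policies1" using sub by blast
  then show ?thesis using cK cl by (metis compact_Int_closed)
qed




lemma A1_kappa_cong: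
  "(\<forall>e. length e < n \<longrightarrow> \<kappa> (sg @ e) = \<kappa>' (sg @ e)) \<Longrightarrow>
   A1 p r g pol \<kappa> n k s h1 sg = A1 p r g pol \<kappa>' n k s h1 sg"
proof (induction n arbitrary: k s h1 sg)
  case 0
  then show ?case by simp
next
  case (Suc n)
  have k0: "\<kappa> sg = \<kappa>' sg" using Suc.prems[rule_format, of "[]"] by simp
  have "A1 p r g pol \<kappa> n (Suc k) s' h' (sg @ [x]) = A1 p r g pol \<kappa>' n (Suc k) s' h' (sg @ [x])"
    for s' h' x
    by (rule Suc.IH) (use Suc.prems in \<open>auto dest: spec[of _ "x # _"]\<close>)
  then show ?case by (simp add: k0)
qed

lemma A1_shift:
  "A1 p r g pol \<kappa> n k s h1 (pre @ sg) = A1 p r g pol (\<lambda>sg'. \<kappa> (pre @ sg')) n k s h1 sg"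
  by (induction n arbitrary: k s h1 sg) simp_all

lemma A1_pol_cong:
  "(\<forall>j\<ge>k. pol j = pol' j) \<Longrightarrow> A1 p r g pol \<kappa> n k s h1 sg = A1 p r g pol' \<kappa> n k s h1 sg"
  by (induction n arbitrary: k s h1 sg) simp_all

definition Rn :: "nat \<Rightarrow> ('b list \<Rightarrow> 'c) \<Rightarrow> ('b list \<Rightarrow> 'c)" where
  "Rn n \<kappa> = (\<lambda>e. if length e < n then \<kappa> e else undefined)"

lemma A1_Rn: "A1 p r g pol (Rn n \<kappa>) n k s h1 [] = A1 p r g pol \<kappa> n k s h1 []"
  by (rule A1_kappa_cong) (simp add: Rn_def)

lemma A2_Rn: "A2 p r g pol (Rn (Suc n) \<kappa>) n t s h1 a1 [] = A2 p r g pol \<kappa> n t s h1 a1 []"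
proof -
  have "A1 p r g pol (Rn (Suc n) \<kappa>) n (Suc t) s' h' [x] = A1 p r g pol \<kappa> n (Suc t) s' h' [x]" for s' h' x
    by (rule A1_kappa_cong) (simp add: Rn_def)
  then show ?thesis by (simp add: A2_def Rn_def)
qed

lemma finite_range_Rn: "finite (range (Rn n :: ('b::finite list \<Rightarrow> 'c::finite) \<Rightarrow> _))"
proof -
  have fin: "finite {e :: 'b list. length e < n}"
  proof -
    have "{e :: 'b list. length e < n} \<subseteq> {xs. set xs \<subseteq> UNIV \<and> length xs \<le> n}" by auto
    then show ?thesis using finite_lists_length_le[of "UNIV :: 'b set" n] finite_subset by auto
  qed
  have "range (Rn n :: ('b list \<Rightarrow> 'c) \<Rightarrow> _) \<subseteq> PiE {e. length e < n} (\<lambda>_. UNIV)"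
    by (auto simp: Rn_def PiE_def extensional_def)
  then show ?thesis using finite_PiE[OF fin, of "\<lambda>_. UNIV :: 'c set"] finite_subset by auto
qed

lemma finite_range_dep:
  fixes F :: "('b::finite list \<Rightarrow> 'c::finite) \<Rightarrow> 'd"
  assumes "\<And>\<kappa>. F \<kappa> = F (Rn n \<kappa>)"
  shows "finite (range F)"
proof -
  have "range F = F ` range (Rn n)" using assms by (auto simp: image_iff)
  then show ?thesis using finite_range_Rn[of n] by (metis finite_imageI)
qed

lemma range_dep_eq:
  fixes F :: "('b list \<Rightarrow> 'c) \<Rightarrow> 'd"
  assumes "\<And>\<kappa>. F \<kappa> = F (Rn n \<kappa>)"
  shows "range F = F ` range (Rn n)"
  using assms by (auto simp: image_iff)

lemma min_cont:
  fixes F :: "'k \<Rightarrow> 'x::topological_space \<Rightarrow> real"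
  assumes "finite K" "K \<noteq> {}" "\<And>k. k \<in> K \<Longrightarrow> continuous_on S (F k)"
  shows "continuous_on S (\<lambda>x. Min ((\<lambda>k. F k x) ` K))"
  using assms
proof (induction K rule: finite_ne_induct)
  case (singleton k)
  then show ?case by simp
next
  case (insert k K)
  have "continuous_on S (\<lambda>x. min (F k x) (Min ((\<lambda>k. F k x) ` K)))"
    using insert by (intro continuous_on_min) auto
  then show ?case using insert by simp
qed

lemma policies1_ne: "(policies1 :: (nat \<Rightarrow> ('a1 \<times> 'z1) list \<Rightarrow> 'a1::finite \<Rightarrow> real) set) \<noteq> {}"
proof -
  have "(\<lambda>k h a. if a = undefined then 1 else 0) \<in> (policies1 :: (nat \<Rightarrow> ('a1 \<times> 'z1) list \<Rightarrow> 'a1::finite \<Rightarrow> real) set)"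
    by (auto simp: policies1_def decision_rules_def)
  then show ?thesis by blast
qed

lemma att:
  fixes F :: "(nat \<Rightarrow> ('a1 \<times> 'z1) list \<Rightarrow> 'a1::finite \<Rightarrow> real) \<Rightarrow> real"
  assumes "continuous_on UNIV F"
  shows "\<exists>pol\<in>policies1. \<forall>pol'\<in>policies1. F pol' \<le> F pol"
  using continuous_attains_sup[OF compact_policies policies1_ne continuous_on_subset[OF assms]] by auto




lemma two_fun_key:
  fixes F G :: "'y \<Rightarrow> real"
  assumes cl: "\<forall>y1\<in>Y. \<forall>y2\<in>Y. \<forall>\<mu>. 0 \<le> \<mu> \<and> \<mu> \<le> 1 \<longrightarrow>
       (\<exists>y3\<in>Y. \<mu> * F y1 + (1 - \<mu>) * F y2 \<le> F y3 \<and> \<mu> * G y1 + (1 - \<mu>) * G y2 \<le> G y3)"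
    and hyp: "\<forall>y\<in>Y. F y \<le> v \<or> G y \<le> v"
    and y: "y \<in> Y" "F y > v" and z: "z \<in> Y" "G z > v"
  shows "(G z - v) * (F y - v) \<le> (v - F z) * (v - G y)"
proof (rule ccontr)
  define a where "a = F y - v"
  define b where "b = v - G y"
  define c where "c = v - F z"
  define d where "d = G z - v"
  assume "\<not> ?thesis"
  then have lt: "c * b < d * a" by (simp add: a_def b_def c_def d_def mult.commute)
  have a: "a > 0" and d: "d > 0" using y z by (auto simp: a_def d_def)
  have b: "b \<ge> 0" using hyp y by (auto simp: b_def)
  have c: "c \<ge> 0" using hyp z by (auto simp: c_def)
  have ac: "a + c > 0" and bd: "b + d > 0" using a b c d by auto
  have "c * (b + d) < d * (a + c)" using lt by (simp add: algebra_simps)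
  then have q: "c / (a + c) < d / (b + d)" using ac bd by (simp add: divide_simps mult.commute)
  obtain A B where AB: "A = c / (a + c)" "B = d / (b + d)" by blast
  define \<mu> where "\<mu> = (A + B) / 2"
  have qAB: "A < B" using q AB by simp
  have "A < \<mu>" using qAB unfolding \<mu>_def by (simp add: field_simps)
  moreover have "\<mu> < B" using qAB unfolding \<mu>_def by (simp add: field_simps)
  ultimately
  have m1: "c / (a + c) < \<mu>" and m2: "\<mu> < d / (b + d)" using AB by simp_all
  have "0 \<le> c / (a + c)" using c ac by simp
  moreover have "d / (b + d) \<le> 1" using b bd by simp
  ultimately have m01: "0 \<le> \<mu>" "\<mu> \<le> 1" using m1 m2 by auto
  have e1: "\<mu> * a - (1 - \<mu>) * c > 0"
  proof -
    have "c < \<mu> * (a + c)" using m1 ac by (simp add: divide_simps mult.commute)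
    then show ?thesis by (simp add: algebra_simps)
  qed
  have e2: "(1 - \<mu>) * d - \<mu> * b > 0"
  proof -
    have "\<mu> * (b + d) < d" using m2 bd by (simp add: divide_simps mult.commute)
    then show ?thesis by (simp add: algebra_simps)
  qed
  obtain y3 where y3: "y3 \<in> Y" "\<mu> * F y + (1 - \<mu>) * F z \<le> F y3" "\<mu> * G y + (1 - \<mu>) * G z \<le> G y3"
    using cl y z m01 by blast
  have "\<mu> * F y + (1 - \<mu>) * F z = v + (\<mu> * a - (1 - \<mu>) * c)"
    by (simp add: a_def c_def algebra_simps)
  then have "F y3 > v" using y3 e1 by linarith
  moreover have "\<mu> * G y + (1 - \<mu>) * G z = v + ((1 - \<mu>) * d - \<mu> * b)"
    by (simp add: b_def d_def algebra_simps)
  then have "G y3 > v" using y3 e2 by linarith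
  ultimately show False using hyp y3 by force
qed

lemma two_fun:
  fixes F G :: "'y \<Rightarrow> real"
  assumes cl: "\<forall>y1\<in>Y. \<forall>y2\<in>Y. \<forall>\<mu>. 0 \<le> \<mu> \<and> \<mu> \<le> 1 \<longrightarrow>
       (\<exists>y3\<in>Y. \<mu> * F y1 + (1 - \<mu>) * F y2 \<le> F y3 \<and> \<mu> * G y1 + (1 - \<mu>) * G y2 \<le> G y3)"
    and hyp: "\<forall>y\<in>Y. F y \<le> v \<or> G y \<le> v"
  shows "\<exists>lam. 0 \<le> lam \<and> lam \<le> 1 \<and> (\<forall>y\<in>Y. lam * F y + (1 - lam) * G y \<le> v)"
proof (cases "\<exists>y\<in>Y. F y > v")
  case False
  then show ?thesis by (intro exI[of _ 1]) (auto simp: not_less)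
next
  case True
  then obtain y0 where y0: "y0 \<in> Y" "F y0 > v" by blast
  show ?thesis
  proof (cases "\<exists>z\<in>Y. G z > v")
    case False
    then show ?thesis by (intro exI[of _ 0]) (auto simp: not_less)
  next
    case True
    define B where "B = {z\<in>Y. G z > v}"
    have Bne: "B \<noteq> {}" using True by (auto simp: B_def)
    have cpos: "v - F z > 0" if "z \<in> B" for z
    proof -
      have zz: "z \<in> Y" "G z > v" using that by (auto simp: B_def)
      have "F z \<le> v" using hyp zz by force
      moreover have "(G z - v) * (F y0 - v) \<le> (v - F z) * (v - G y0)"
        using two_fun_key[OF cl hyp y0 zz] .
      moreover have "(G z - v) * (F y0 - v) > 0" using zz y0 by simp
      ultimately show ?thesis by (cases "F z = v") auto
    qed
    have bpos: "v - G y > 0" if "y \<in> Y" "F y > v" for y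
    proof -
      obtain z where zz: "z \<in> Y" "G z > v" using True by blast
      have "G y \<le> v" using hyp that by force
      moreover have "(G z - v) * (F y - v) \<le> (v - F z) * (v - G y)"
        using two_fun_key[OF cl hyp that zz] .
      moreover have "(G z - v) * (F y - v) > 0" using zz that by simp
      ultimately show ?thesis by (cases "G y = v") auto
    qed
    define R where "R = (\<lambda>z. (G z - v) / (v - F z))"
    have Rle: "R z \<le> (v - G y) / (F y - v)" if "z \<in> B" "y \<in> Y" "F y > v" for z y
    proof -
      have zz: "z \<in> Y" "G z > v" using that by (auto simp: B_def)
      have "(G z - v) * (F y - v) \<le> (v - F z) * (v - G y)"
        using two_fun_key[OF cl hyp that(2,3) zz] .
      then show ?thesis using cpos[OF that(1)] that(3)
        by (simp add: R_def divide_simps mult.commute)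
    qed
    define T where "T = Sup (R ` B)"
    have bdd: "bdd_above (R ` B)" using Rle y0 by (auto intro!: bdd_aboveI2)
    have RT: "R z \<le> T" if "z \<in> B" for z using bdd that by (auto simp: T_def intro: cSup_upper)
    have Tle: "T \<le> (v - G y) / (F y - v)" if "y \<in> Y" "F y > v" for y
      unfolding T_def using Bne Rle that by (intro cSup_least) auto
    obtain z0 where "z0 \<in> B" using Bne by blast
    have T0: "T \<ge> 0"
    proof -
      have "R z0 > 0" using cpos[OF \<open>z0 \<in> B\<close>] \<open>z0 \<in> B\<close> by (auto simp: R_def B_def)
      then show ?thesis using RT[OF \<open>z0 \<in> B\<close>] by simp
    qed
    define lam where "lam = T / (1 + T)"
    have key: "(1 + T) * (lam * F y + (1 - lam) * G y - v) = T * (F y - v) + (G y - v)" for y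
    proof -
      have h1: "(1 + T) * lam = T" using T0 by (simp add: lam_def)
      have h2: "(1 + T) * (1 - lam) = 1" using T0 by (simp add: lam_def field_simps)
      have "(1 + T) * (lam * F y + (1 - lam) * G y - v) = ((1 + T) * lam) * F y + ((1 + T) * (1 - lam)) * G y - (1 + T) * v"
        by (simp add: algebra_simps)
      also have "\<dots> = T * F y + 1 * G y - (1 + T) * v" by (simp only: h1 h2)
      finally show ?thesis by (simp add: algebra_simps)
    qed
    show ?thesis
    proof (intro exI[of _ lam] conjI ballI)
      show "0 \<le> lam" using T0 by (simp add: lam_def)
      show "lam \<le> 1" using T0 by (simp add: lam_def)
    next
      fix y assume yY: "y \<in> Y"
      have "T * (F y - v) + (G y - v) \<le> 0"
      proof (cases "F y > v")
        case True
        have "T \<le> (v - G y) / (F y - v)" using Tle yY True by blast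
        then have "T * (F y - v) \<le> v - G y" using True by (simp add: divide_simps)
        then show ?thesis by simp
      next
        case Fle: False
        show ?thesis
        proof (cases "G y > v")
          case True
          then have yB: "y \<in> B" using yY by (simp add: B_def)
          have "R y \<le> T" using RT[OF yB] .
          then have "G y - v \<le> T * (v - F y)" using cpos[OF yB] by (simp add: R_def divide_simps)
          then show ?thesis by (simp add: algebra_simps)
        next
          case False
          then show ?thesis using Fle T0 by (simp add: not_less mult_nonneg_nonpos add_nonpos_nonpos)
        qed
      qed
      then have "(1 + T) * (lam * F y + (1 - lam) * G y - v) \<le> 0" using key[of y] by simp
      then have "lam * F y + (1 - lam) * G y - v \<le> 0" using T0 by (simp add: mult_le_0_iff)
      then show "lam * F y + (1 - lam) * G y \<le> v" by linarith
    qed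
  qed
qed

lemma fan:
  fixes f :: "'i \<Rightarrow> 'y \<Rightarrow> real"
  assumes "finite I" "I \<noteq> {}"
    and "\<forall>y1\<in>Y. \<forall>y2\<in>Y. \<forall>\<mu>. 0 \<le> \<mu> \<and> \<mu> \<le> 1 \<longrightarrow>
       (\<exists>y3\<in>Y. \<forall>i\<in>I. \<mu> * f i y1 + (1 - \<mu>) * f i y2 \<le> f i y3)"
    and "\<forall>y\<in>Y. \<exists>i\<in>I. f i y \<le> v"
  shows "\<exists>q. (\<forall>i\<in>I. 0 \<le> q i) \<and> sum q I = 1 \<and> (\<forall>y\<in>Y. (\<Sum>i\<in>I. q i * f i y) \<le> v)"
  using assms
proof (induction I arbitrary: Y rule: finite_ne_induct)
  case (singleton j)
  then show ?case by (intro exI[of _ "\<lambda>_. 1"]) auto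
next
  case (insert j I)
  define Y' where "Y' = {y\<in>Y. f j y > v}"
  have cl': "\<forall>y1\<in>Y'. \<forall>y2\<in>Y'. \<forall>\<mu>. 0 \<le> \<mu> \<and> \<mu> \<le> 1 \<longrightarrow>
       (\<exists>y3\<in>Y'. \<forall>i\<in>I. \<mu> * f i y1 + (1 - \<mu>) * f i y2 \<le> f i y3)"
  proof (intro ballI allI impI)
    fix y1 y2 and \<mu> :: real assume y12: "y1 \<in> Y'" "y2 \<in> Y'" and m: "0 \<le> \<mu> \<and> \<mu> \<le> 1"
    obtain y3 where y3: "y3 \<in> Y" "\<forall>i\<in>insert j I. \<mu> * f i y1 + (1 - \<mu>) * f i y2 \<le> f i y3"
      using insert.prems(1) y12 m unfolding Y'_def by blast
    have "\<mu> * f j y1 + (1 - \<mu>) * f j y2 > v"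
    proof -
      have "\<mu> * f j y1 \<ge> \<mu> * v" using m y12 by (intro mult_left_mono) (auto simp: Y'_def)
      moreover have "(1 - \<mu>) * f j y2 \<ge> (1 - \<mu>) * v" using m y12 by (intro mult_left_mono) (auto simp: Y'_def)
      moreover have "\<mu> * f j y1 > \<mu> * v \<or> (1 - \<mu>) * f j y2 > (1 - \<mu>) * v"
        using m y12 by (cases "\<mu> = 0") (auto simp: Y'_def)
      ultimately show ?thesis by (auto simp: algebra_simps)
    qed
    then have "y3 \<in> Y'" using y3 by (force simp: Y'_def)
    then show "\<exists>y3\<in>Y'. \<forall>i\<in>I. \<mu> * f i y1 + (1 - \<mu>) * f i y2 \<le> f i y3" using y3 by blast
  qed
  have hyp': "\<forall>y\<in>Y'. \<exists>i\<in>I. f i y \<le> v"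
    using insert.prems(2) by (force simp: Y'_def)
  obtain q where q: "\<forall>i\<in>I. 0 \<le> q i" "sum q I = 1" "\<forall>y\<in>Y'. (\<Sum>i\<in>I. q i * f i y) \<le> v"
    using insert.IH[OF cl' hyp'] by blast
  define G where "G = (\<lambda>y. \<Sum>i\<in>I. q i * f i y)"
  have cl2: "\<forall>y1\<in>Y. \<forall>y2\<in>Y. \<forall>\<mu>. 0 \<le> \<mu> \<and> \<mu> \<le> 1 \<longrightarrow>
       (\<exists>y3\<in>Y. \<mu> * f j y1 + (1 - \<mu>) * f j y2 \<le> f j y3 \<and> \<mu> * G y1 + (1 - \<mu>) * G y2 \<le> G y3)"
  proof (intro ballI allI impI)
    fix y1 y2 and \<mu> :: real assume y12: "y1 \<in> Y" "y2 \<in> Y" and m: "0 \<le> \<mu> \<and> \<mu> \<le> 1"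
    obtain y3 where y3: "y3 \<in> Y" "\<forall>i\<in>insert j I. \<mu> * f i y1 + (1 - \<mu>) * f i y2 \<le> f i y3"
      using insert.prems(1) y12 m by blast
    have "\<mu> * G y1 + (1 - \<mu>) * G y2 = (\<Sum>i\<in>I. \<mu> * (q i * f i y1) + (1 - \<mu>) * (q i * f i y2))"
      by (simp only: G_def sum_distrib_left sum.distrib)
    also have "\<dots> = (\<Sum>i\<in>I. q i * (\<mu> * f i y1 + (1 - \<mu>) * f i y2))"
      by (rule sum.cong) (auto simp: algebra_simps)
    also have "\<dots> \<le> G y3" unfolding G_def
      using y3 q(1) by (intro sum_mono mult_left_mono) auto
    finally show "\<exists>y3\<in>Y. \<mu> * f j y1 + (1 - \<mu>) * f j y2 \<le> f j y3 \<and> \<mu> * G y1 + (1 - \<mu>) * G y2 \<le> G y3"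
      using y3 by blast
  qed
  have hyp2: "\<forall>y\<in>Y. f j y \<le> v \<or> G y \<le> v"
    using q(3) by (force simp: Y'_def G_def)
  obtain lam where l: "0 \<le> lam" "lam \<le> 1" "\<forall>y\<in>Y. lam * f j y + (1 - lam) * G y \<le> v"
    using two_fun[OF cl2 hyp2] by blast
  define q' where "q' = (\<lambda>i. if i = j then lam else (1 - lam) * q i)"
  have s1: "(\<Sum>i\<in>I. q' i * h i) = (1 - lam) * (\<Sum>i\<in>I. q i * h i)" for h :: "'i \<Rightarrow> real"
  proof -
    have "(\<Sum>i\<in>I. q' i * h i) = (\<Sum>i\<in>I. (1 - lam) * (q i * h i))"
      by (rule sum.cong) (use insert.hyps in \<open>auto simp: q'_def\<close>)
    then show ?thesis by (simp add: sum_distrib_left)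
  qed
  show ?case
  proof (intro exI[of _ q'] conjI ballI)
    show "0 \<le> q' i" if "i \<in> insert j I" for i using l q(1) that by (auto simp: q'_def)
    show "sum q' (insert j I) = 1"
      using s1[of "\<lambda>_. 1"] insert.hyps q(2) by (simp add: q'_def)
    fix y assume "y \<in> Y"
    then show "(\<Sum>i\<in>insert j I. q' i * f i y) \<le> v"
      using s1[of "\<lambda>i. f i y"] insert.hyps l(3) by (simp add: q'_def G_def)
  qed
qed




lemma sum2: "(\<Sum>(a,b)\<in>A\<times>B. f a b) = (\<Sum>a\<in>A. \<Sum>b\<in>B. f a b)"
  by (simp add: sum.cartesian_product)

lemma sum3: "(\<Sum>(a,b,c)\<in>A\<times>B\<times>C. f a b c) = (\<Sum>a\<in>A. \<Sum>b\<in>B. \<Sum>c\<in>C. f a b c)"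
  by (simp add: sum.cartesian_product)

lemma sum4: "(\<Sum>(a,b,c,d)\<in>A\<times>B\<times>C\<times>D. f a b c d) = (\<Sum>a\<in>A. \<Sum>b\<in>B. \<Sum>c\<in>C. \<Sum>d\<in>D. f a b c d)"
  by (simp add: sum.cartesian_product)

lemma sum_UNIV3: "(\<Sum>ob\<in>(UNIV :: ('a::finite \<times> 'b::finite \<times> 'c::finite) set). f ob) = (\<Sum>a\<in>UNIV. \<Sum>b\<in>UNIV. \<Sum>c\<in>UNIV. f (a,b,c))"
proof -
  have "(\<Sum>ob\<in>(UNIV :: ('a \<times> 'b \<times> 'c) set). f ob) = (\<Sum>ob\<in>UNIV\<times>UNIV\<times>UNIV. f ob)"
    by simp
  also have "\<dots> = (\<Sum>(a,b,c)\<in>UNIV\<times>UNIV\<times>UNIV. f (a,b,c))"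
    by (rule sum.cong) auto
  finally show ?thesis by (simp only: sum3)
qed

lemma finite_hist: "finite (hist t :: ('a::finite) list set)"
proof -
  have "hist t \<subseteq> {xs :: 'a list. set xs \<subseteq> UNIV \<and> length xs \<le> t}" by (auto simp: hist_def)
  then show ?thesis using finite_lists_length_le[of "UNIV :: 'a set" t] finite_subset by auto
qed

lemma hist_Suc: "(hist (Suc t) :: ('a \<times> 'b) list set) = (\<lambda>(h,a,z). h @ [(a,z)]) ` (hist t \<times> UNIV \<times> UNIV)"
proof (intro equalityI subsetI)
  fix h' :: "('a \<times> 'b) list" assume "h' \<in> hist (Suc t)"
  then have l: "length h' = Suc t" by (simp add: hist_def)
  then have "h' \<noteq> []" by auto
  then have e: "h' = butlast h' @ [(fst (last h'), snd (last h'))]" by simp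
  have "butlast h' \<in> hist t" using l by (simp add: hist_def)
  then have "(butlast h', fst (last h'), snd (last h')) \<in> hist t \<times> UNIV \<times> UNIV" by simp
  then have "(\<lambda>(h,a,z). h @ [(a,z)]) (butlast h', fst (last h'), snd (last h')) \<in> (\<lambda>(h,a,z). h @ [(a,z)]) ` (hist t \<times> UNIV \<times> UNIV)"
    by (rule imageI)
  then show "h' \<in> (\<lambda>(h,a,z). h @ [(a,z)]) ` (hist t \<times> UNIV \<times> UNIV)" using e by simp
next
  fix h' :: "('a \<times> 'b) list" assume "h' \<in> (\<lambda>(h,a,z). h @ [(a,z)]) ` (hist t \<times> UNIV \<times> UNIV)"
  then show "h' \<in> hist (Suc t)" by (clarsimp simp: hist_def)
qed

lemma inj_snoc: "inj_on (\<lambda>(h,a,z). h @ [(a,z)]) A"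
  by (auto simp: inj_on_def)

lemma sum_hist_Suc:
  "(\<Sum>h'\<in>hist (Suc t). f h') = (\<Sum>h\<in>hist t. \<Sum>a\<in>UNIV. \<Sum>z\<in>UNIV. f (h @ [(a,z)]))"
proof -
  have "(\<Sum>h'\<in>hist (Suc t). f h') = (\<Sum>x\<in>hist t \<times> UNIV \<times> UNIV. f ((\<lambda>(h,a,z). h @ [(a,z)]) x))"
    unfolding hist_Suc by (rule sum.reindex[OF inj_snoc, unfolded comp_def])
  also have "\<dots> = (\<Sum>(h,a,z)\<in>hist t \<times> UNIV \<times> UNIV. f (h @ [(a,z)]))"
    by (rule sum.cong) auto
  finally show ?thesis by (simp only: sum3)
qed

lemma Min_scale:
  fixes f :: "'k \<Rightarrow> real"
  assumes "finite (range f)" "0 \<le> c"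
  shows "Min (range (\<lambda>k. c * f k)) = c * Min (range f)"
proof (rule Min_eqI)
  have "range (\<lambda>k. c * f k) = (\<lambda>x. c * x) ` range f" by auto
  then show "finite (range (\<lambda>k. c * f k))" using assms by simp
  show "c * Min (range f) \<le> y" if "y \<in> range (\<lambda>k. c * f k)" for y
    using that assms by (auto intro!: mult_left_mono)
  obtain k where "Min (range f) = f k" using Min_in[OF assms(1)] by auto
  then show "c * Min (range f) \<in> range (\<lambda>k. c * f k)" by auto
qed

lemma Min_range_eqI:
  fixes f :: "'k \<Rightarrow> real"
  assumes "finite (range f)" "\<And>k. c \<le> f k" "f k0 = c"
  shows "Min (range f) = c"
  using assms by (intro Min_eqI) auto

lemma Min_range_le: "finite (range f) \<Longrightarrow> Min (range f) \<le> f k"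
  by (rule Min_le) auto

lemma Min_range_ex: "finite (range f) \<Longrightarrow> \<exists>k. Min (range f) = f k"
proof -
  assume "finite (range f)"
  then have "Min (range f) \<in> range f" by (intro Min_in) auto
  then show ?thesis by auto
qed




context
  fixes p :: "'s::finite \<Rightarrow> 'a1::finite \<Rightarrow> 'a2::finite \<Rightarrow> 's \<times> 'z1::finite \<times> 'z2::finite \<Rightarrow> real"
    and r :: "'s \<Rightarrow> 'a1 \<Rightarrow> 'a2 \<Rightarrow> real"
    and g :: real
begin

definition W1 :: "nat \<Rightarrow> nat \<Rightarrow> ('s \<times> ('a1 \<times> 'z1) list \<times> ('a2 \<times> 'z2) list \<Rightarrow> real)
   \<Rightarrow> (nat \<Rightarrow> ('a1 \<times> 'z1) list \<Rightarrow> 'a1 \<Rightarrow> real) \<Rightarrow> real" where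
  "W1 n t x pol = (\<Sum>h2\<in>hist t. Min (range (\<lambda>\<kappa>.
      \<Sum>(s,h1)\<in>UNIV \<times> hist t. x (s,h1,h2) * A1 p r g pol \<kappa> n t s h1 [])))"

definition W2 :: "nat \<Rightarrow> nat \<Rightarrow> ('s \<times> ('a1 \<times> 'z1) list \<times> ('a2 \<times> 'z2) list \<times> 'a1 \<Rightarrow> real)
   \<Rightarrow> (nat \<Rightarrow> ('a1 \<times> 'z1) list \<Rightarrow> 'a1 \<Rightarrow> real) \<Rightarrow> real" where
  "W2 n t x pol = (\<Sum>h2\<in>hist t. Min (range (\<lambda>\<kappa>.
      \<Sum>(s,h1,a1)\<in>UNIV \<times> hist t \<times> UNIV. x (s,h1,h2,a1) * A2 p r g pol \<kappa> n t s h1 a1 [])))"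

lemma Val1_eq: "Val1 t (range (\<lambda>\<kappa>. \<lambda>(s,h1). A1 p r g pol \<kappa> n t s h1 [])) x = W1 n t x pol"
  by (simp add: Val1_def W1_def image_image)

lemma Val2_eq: "Val2 t (range (\<lambda>\<kappa>. \<lambda>(s,h1,a1). A2 p r g pol \<kappa> n t s h1 a1 [])) x = W2 n t x pol"
  by (simp add: Val2_def W2_def image_image)

lemma W1_cont: "continuous_on UNIV (W1 n t x)"
proof -
  define F where "F = (\<lambda>h2 \<kappa> pol. \<Sum>(s,h1)\<in>UNIV \<times> hist t. x (s,h1,h2) * A1 p r g pol \<kappa> n t s h1 [])"
  have e: "W1 n t x = (\<lambda>pol. \<Sum>h2\<in>hist t. Min ((\<lambda>\<kappa>. F h2 \<kappa> pol) ` range (Rn n)))"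
  proof
    fix pol
    have "range (\<lambda>\<kappa>. F h2 \<kappa> pol) = (\<lambda>\<kappa>. F h2 \<kappa> pol) ` range (Rn n)" for h2
      by (rule range_dep_eq) (simp add: F_def A1_Rn)
    then show "W1 n t x pol = (\<Sum>h2\<in>hist t. Min ((\<lambda>\<kappa>. F h2 \<kappa> pol) ` range (Rn n)))"
      by (simp add: W1_def F_def)
  qed
  have c: "continuous_on UNIV (F h2 \<kappa>)" for h2 \<kappa>
    unfolding F_def by (auto intro!: continuous_intros A1_cont simp: case_prod_beta)
  show ?thesis unfolding e
    by (intro continuous_on_sum min_cont finite_range_Rn c) auto
qed

lemma A2_cont: "continuous_on UNIV (\<lambda>pol. A2 p r g pol \<kappa> n t s h1 a1 sg)"
  unfolding A2_def by (auto intro!: continuous_intros A1_cont)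

lemma W2_cont: "continuous_on UNIV (W2 n t x)"
proof -
  define F where "F = (\<lambda>h2 \<kappa> pol. \<Sum>(s,h1,a1)\<in>UNIV \<times> hist t \<times> UNIV. x (s,h1,h2,a1) * A2 p r g pol \<kappa> n t s h1 a1 [])"
  have e: "W2 n t x = (\<lambda>pol. \<Sum>h2\<in>hist t. Min ((\<lambda>\<kappa>. F h2 \<kappa> pol) ` range (Rn (Suc n))))"
  proof
    fix pol
    have "range (\<lambda>\<kappa>. F h2 \<kappa> pol) = (\<lambda>\<kappa>. F h2 \<kappa> pol) ` range (Rn (Suc n))" for h2
      by (rule range_dep_eq) (simp add: F_def A2_Rn)
    then show "W2 n t x pol = (\<Sum>h2\<in>hist t. Min ((\<lambda>\<kappa>. F h2 \<kappa> pol) ` range (Rn (Suc n))))"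
      by (simp add: W2_def F_def)
  qed
  have c: "continuous_on UNIV (F h2 \<kappa>)" for h2 \<kappa>
    unfolding F_def by (auto intro!: continuous_intros A2_cont simp: case_prod_beta)
  show ?thesis unfolding e
    by (intro continuous_on_sum min_cont finite_range_Rn c) auto
qed

lemma W1_Suc: "W1 (Suc n) t x pol = W2 n t (tau1 x (pol t)) pol"
proof -
  have "(\<Sum>(s,h1)\<in>UNIV \<times> hist t. x (s,h1,h2) * A1 p r g pol \<kappa> (Suc n) t s h1 [])
      = (\<Sum>(s,h1,a1)\<in>UNIV \<times> hist t \<times> UNIV. tau1 x (pol t) (s,h1,h2,a1) * A2 p r g pol \<kappa> n t s h1 a1 [])"
    for h2 \<kappa>
    by (simp only: sum2 sum3) (simp add: A2_def tau1_def sum_distrib_left mult.assoc)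
  then show ?thesis by (simp add: W1_def W2_def)
qed

lemma W2_pol_cong: "(\<forall>j\<ge>Suc t. pol j = pol' j) \<Longrightarrow> W2 n t y pol = W2 n t y pol'"
proof -
  assume a: "\<forall>j\<ge>Suc t. pol j = pol' j"
  have "A2 p r g pol \<kappa> n t s h1 a1 [] = A2 p r g pol' \<kappa> n t s h1 a1 []" for \<kappa> s h1 a1
    unfolding A2_def by (intro arg_cong2[where f="(+)"] refl arg_cong2[where f="(*)"] sum.cong) (auto intro: A1_pol_cong[OF a])
  then show ?thesis by (simp add: W2_def)
qed

end



lemma perm5:
  "(\<Sum>a\<in>A. \<Sum>b\<in>B. \<Sum>c\<in>C. \<Sum>d\<in>D. \<Sum>e\<in>E. f a b c d e)
 = (\<Sum>c\<in>C. \<Sum>e\<in>E. \<Sum>a\<in>A. \<Sum>b\<in>B. \<Sum>d\<in>D. f a b c d e)"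
proof -
  have "(\<Sum>a\<in>A. \<Sum>b\<in>B. \<Sum>c\<in>C. \<Sum>d\<in>D. \<Sum>e\<in>E. f a b c d e)
      = (\<Sum>a\<in>A. \<Sum>b\<in>B. \<Sum>c\<in>C. \<Sum>e\<in>E. \<Sum>d\<in>D. f a b c d e)"
    by (rule sum.cong[OF refl])+ (rule sum.swap)
  also have "\<dots> = (\<Sum>a\<in>A. \<Sum>c\<in>C. \<Sum>b\<in>B. \<Sum>e\<in>E. \<Sum>d\<in>D. f a b c d e)"
    by (rule sum.cong[OF refl])+ (rule sum.swap)
  also have "\<dots> = (\<Sum>c\<in>C. \<Sum>a\<in>A. \<Sum>b\<in>B. \<Sum>e\<in>E. \<Sum>d\<in>D. f a b c d e)"
    by (rule sum.swap)
  also have "\<dots> = (\<Sum>c\<in>C. \<Sum>a\<in>A. \<Sum>e\<in>E. \<Sum>b\<in>B. \<Sum>d\<in>D. f a b c d e)"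
    by (rule sum.cong[OF refl])+ (rule sum.swap)
  also have "\<dots> = (\<Sum>c\<in>C. \<Sum>e\<in>E. \<Sum>a\<in>A. \<Sum>b\<in>B. \<Sum>d\<in>D. f a b c d e)"
    by (rule sum.cong[OF refl])+ (rule sum.swap)
  finally show ?thesis .
qed

lemma perm6:
  "(\<Sum>a\<in>A. \<Sum>b\<in>B. \<Sum>c\<in>C. \<Sum>d\<in>D. \<Sum>e\<in>E. \<Sum>f\<in>F. h a b c d e f)
 = (\<Sum>f\<in>F. \<Sum>d\<in>D. \<Sum>b\<in>B. \<Sum>c\<in>C. \<Sum>e\<in>E. \<Sum>a\<in>A. h a b c d e f)"
proof -
  have s1: "(\<Sum>a\<in>A. \<Sum>b\<in>B. \<Sum>c\<in>C. \<Sum>d\<in>D. \<Sum>e\<in>E. \<Sum>f\<in>F. h a b c d e f)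
      = (\<Sum>b\<in>B. \<Sum>c\<in>C. \<Sum>d\<in>D. \<Sum>e\<in>E. \<Sum>f\<in>F. \<Sum>a\<in>A. h a b c d e f)"
  proof -
    have "(\<Sum>a\<in>A. \<Sum>b\<in>B. \<Sum>c\<in>C. \<Sum>d\<in>D. \<Sum>e\<in>E. \<Sum>f\<in>F. h a b c d e f)
        = (\<Sum>b\<in>B. \<Sum>a\<in>A. \<Sum>c\<in>C. \<Sum>d\<in>D. \<Sum>e\<in>E. \<Sum>f\<in>F. h a b c d e f)"
      by (rule sum.swap)
    also have "\<dots> = (\<Sum>b\<in>B. \<Sum>c\<in>C. \<Sum>a\<in>A. \<Sum>d\<in>D. \<Sum>e\<in>E. \<Sum>f\<in>F. h a b c d e f)"
      by (rule sum.cong[OF refl])+ (rule sum.swap)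
    also have "\<dots> = (\<Sum>b\<in>B. \<Sum>c\<in>C. \<Sum>d\<in>D. \<Sum>a\<in>A. \<Sum>e\<in>E. \<Sum>f\<in>F. h a b c d e f)"
      by (rule sum.cong[OF refl])+ (rule sum.swap)
    also have "\<dots> = (\<Sum>b\<in>B. \<Sum>c\<in>C. \<Sum>d\<in>D. \<Sum>e\<in>E. \<Sum>a\<in>A. \<Sum>f\<in>F. h a b c d e f)"
      by (rule sum.cong[OF refl])+ (rule sum.swap)
    also have "\<dots> = (\<Sum>b\<in>B. \<Sum>c\<in>C. \<Sum>d\<in>D. \<Sum>e\<in>E. \<Sum>f\<in>F. \<Sum>a\<in>A. h a b c d e f)"
      by (rule sum.cong[OF refl])+ (rule sum.swap)
    finally show ?thesis .
  qed
  also have "\<dots> = (\<Sum>f\<in>F. \<Sum>b\<in>B. \<Sum>c\<in>C. \<Sum>d\<in>D. \<Sum>e\<in>E. \<Sum>a\<in>A. h a b c d e f)"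
  proof -
    have "(\<Sum>b\<in>B. \<Sum>c\<in>C. \<Sum>d\<in>D. \<Sum>e\<in>E. \<Sum>f\<in>F. \<Sum>a\<in>A. h a b c d e f)
        = (\<Sum>b\<in>B. \<Sum>c\<in>C. \<Sum>d\<in>D. \<Sum>f\<in>F. \<Sum>e\<in>E. \<Sum>a\<in>A. h a b c d e f)"
      by (rule sum.cong[OF refl])+ (rule sum.swap)
    also have "\<dots> = (\<Sum>b\<in>B. \<Sum>c\<in>C. \<Sum>f\<in>F. \<Sum>d\<in>D. \<Sum>e\<in>E. \<Sum>a\<in>A. h a b c d e f)"
      by (rule sum.cong[OF refl])+ (rule sum.swap)
    also have "\<dots> = (\<Sum>b\<in>B. \<Sum>f\<in>F. \<Sum>c\<in>C. \<Sum>d\<in>D. \<Sum>e\<in>E. \<Sum>a\<in>A. h a b c d e f)"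
      by (rule sum.cong[OF refl])+ (rule sum.swap)
    also have "\<dots> = (\<Sum>f\<in>F. \<Sum>b\<in>B. \<Sum>c\<in>C. \<Sum>d\<in>D. \<Sum>e\<in>E. \<Sum>a\<in>A. h a b c d e f)"
      by (rule sum.swap)
    finally show ?thesis .
  qed
  also have "\<dots> = (\<Sum>f\<in>F. \<Sum>d\<in>D. \<Sum>b\<in>B. \<Sum>c\<in>C. \<Sum>e\<in>E. \<Sum>a\<in>A. h a b c d e f)"
  proof -
    have "(\<Sum>f\<in>F. \<Sum>b\<in>B. \<Sum>c\<in>C. \<Sum>d\<in>D. \<Sum>e\<in>E. \<Sum>a\<in>A. h a b c d e f)
        = (\<Sum>f\<in>F. \<Sum>b\<in>B. \<Sum>d\<in>D. \<Sum>c\<in>C. \<Sum>e\<in>E. \<Sum>a\<in>A. h a b c d e f)"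
      by (rule sum.cong[OF refl])+ (rule sum.swap)
    also have "\<dots> = (\<Sum>f\<in>F. \<Sum>d\<in>D. \<Sum>b\<in>B. \<Sum>c\<in>C. \<Sum>e\<in>E. \<Sum>a\<in>A. h a b c d e f)"
      by (rule sum.cong[OF refl])+ (rule sum.swap)
    finally show ?thesis .
  qed
  finally show ?thesis .
qed




definition mu :: "nat \<Rightarrow> (nat \<Rightarrow> ('a \<times> 'z) list \<Rightarrow> 'a \<Rightarrow> real) \<Rightarrow> ('a \<times> 'z) list \<Rightarrow> real" where
  "mu t0 pol h = (\<Prod>j\<in>{t0..<length h}. pol j (take j h) (fst (h ! j)))"

definition mixp :: "nat \<Rightarrow> real \<Rightarrow> (nat \<Rightarrow> ('a \<times> 'z) list \<Rightarrow> 'a \<Rightarrow> real) \<Rightarrow> (nat \<Rightarrow> ('a \<times> 'z) list \<Rightarrow> 'a \<Rightarrow> real)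
   \<Rightarrow> (nat \<Rightarrow> ('a \<times> 'z) list \<Rightarrow> 'a \<Rightarrow> real)" where
  "mixp t0 lam pol1 pol2 = (\<lambda>j h a.
     if lam * mu t0 pol1 h + (1 - lam) * mu t0 pol2 h = 0 then pol1 j h a
     else (lam * mu t0 pol1 h * pol1 j h a + (1 - lam) * mu t0 pol2 h * pol2 j h a)
          / (lam * mu t0 pol1 h + (1 - lam) * mu t0 pol2 h))"

lemma mu_snoc:
  assumes "t0 \<le> length h"
  shows "mu t0 pol (h @ [(a,z)]) = mu t0 pol h * pol (length h) h a"
proof -
  have "{t0..<length (h @ [(a,z)])} = insert (length h) {t0..<length h}" using assms by auto
  then have "mu t0 pol (h @ [(a,z)]) = pol (length h) h a *
      (\<Prod>j\<in>{t0..<length h}. pol j (take j (h @ [(a,z)])) (fst ((h @ [(a,z)]) ! j)))"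
    by (simp add: mu_def)
  also have "(\<Prod>j\<in>{t0..<length h}. pol j (take j (h @ [(a,z)])) (fst ((h @ [(a,z)]) ! j))) = mu t0 pol h"
    unfolding mu_def by (rule prod.cong) (auto simp: nth_append)
  finally show ?thesis by simp
qed

lemma mu_base: "length h = t0 \<Longrightarrow> mu t0 pol h = 1"
  by (simp add: mu_def)

lemma pol_nonneg: "pol \<in> policies1 \<Longrightarrow> 0 \<le> pol k h a"
  by (simp add: policies1_def decision_rules_def)

lemma pol_sum: "pol \<in> policies1 \<Longrightarrow> sum (pol k h) UNIV = 1"
  by (simp add: policies1_def decision_rules_def)

lemma mu_nonneg: "pol \<in> policies1 \<Longrightarrow> 0 \<le> mu t0 pol h"
  unfolding mu_def by (intro prod_nonneg) (auto intro: pol_nonneg)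

lemma mixp_eq:
  assumes "pol1 \<in> policies1" "pol2 \<in> policies1" "0 \<le> lam" "lam \<le> 1"
  shows "(lam * mu t0 pol1 h + (1 - lam) * mu t0 pol2 h) * mixp t0 lam pol1 pol2 j h a
       = lam * mu t0 pol1 h * pol1 j h a + (1 - lam) * mu t0 pol2 h * pol2 j h a"
proof (cases "lam * mu t0 pol1 h + (1 - lam) * mu t0 pol2 h = 0")
  case True
  have n1: "0 \<le> lam * mu t0 pol1 h" using assms(3) mu_nonneg[OF assms(1), of t0 h] by simp
  have n2: "0 \<le> (1 - lam) * mu t0 pol2 h" using assms(4) mu_nonneg[OF assms(2), of t0 h] by simp
  have e1: "lam * mu t0 pol1 h = 0" using True n1 n2 by linarith
  have e2: "(1 - lam) * mu t0 pol2 h = 0" using True n1 n2 by linarith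
  have z1: "lam * mu t0 pol1 h * pol1 j h a = 0" using e1 by simp
  have z2: "(1 - lam) * mu t0 pol2 h * pol2 j h a = 0" using e2 by simp
  show ?thesis by (simp only: True z1 z2)
next
  case False
  then show ?thesis by (simp add: mixp_def)
qed

lemma mixp_pol:
  assumes "pol1 \<in> policies1" "pol2 \<in> policies1" "0 \<le> lam" "lam \<le> 1"
  shows "mixp t0 lam pol1 pol2 \<in> policies1"
  unfolding policies1_def decision_rules_def
proof (intro CollectI allI conjI)
  fix j h
  define D where "D = lam * mu t0 pol1 h + (1 - lam) * mu t0 pol2 h"
  have n1: "0 \<le> lam * mu t0 pol1 h" using assms(3) mu_nonneg[OF assms(1), of t0 h] by simp
  have n2: "0 \<le> (1 - lam) * mu t0 pol2 h" using assms(4) mu_nonneg[OF assms(2), of t0 h] by simp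
  show "0 \<le> mixp t0 lam pol1 pol2 j h a" for a
  proof -
    have "0 \<le> pol1 j h a" "0 \<le> pol2 j h a" using assms(1,2) by (auto intro: pol_nonneg)
    then show ?thesis using n1 n2 unfolding mixp_def
      by (auto intro!: divide_nonneg_nonneg add_nonneg_nonneg mult_nonneg_nonneg)
  qed
  show "sum (mixp t0 lam pol1 pol2 j h) UNIV = 1"
  proof (cases "D = 0")
    case True
    then show ?thesis using assms(1) by (simp add: mixp_def D_def pol_sum)
  next
    case False
    have "sum (mixp t0 lam pol1 pol2 j h) UNIV
        = (\<Sum>a\<in>UNIV. lam * mu t0 pol1 h * pol1 j h a + (1 - lam) * mu t0 pol2 h * pol2 j h a) / D"
      using False by (simp add: mixp_def D_def sum_divide_distrib)
    also have "\<dots> = D / D"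
      using assms(1,2) by (simp add: sum.distrib sum_distrib_left[symmetric] pol_sum D_def)
    finally show ?thesis using False by simp
  qed
qed

lemma A1_mix:
  assumes P: "pol1 \<in> policies1" "pol2 \<in> policies1" "0 \<le> lam" "lam \<le> 1"
  shows "length h1 = k \<Longrightarrow> t0 \<le> k \<Longrightarrow>
    (lam * mu t0 pol1 h1 + (1 - lam) * mu t0 pol2 h1) * A1 p r g (mixp t0 lam pol1 pol2) \<kappa> n k s h1 sg
    = lam * mu t0 pol1 h1 * A1 p r g pol1 \<kappa> n k s h1 sg + (1 - lam) * mu t0 pol2 h1 * A1 p r g pol2 \<kappa> n k s h1 sg"
proof (induction n arbitrary: k s h1 sg)
  case 0
  then show ?case by simp
next
  case (Suc n)
  define m1 where "m1 = mu t0 pol1 h1"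
  define m2 where "m2 = mu t0 pol2 h1"
  define pm where "pm = mixp t0 lam pol1 pol2"
  define E where "E = (\<lambda>a. lam * m1 * pol1 k h1 a + (1 - lam) * m2 * pol2 k h1 a)"
  define B where "B = (\<lambda>pol a ob. A1 p r g pol \<kappa> n (Suc k) (fst ob) (h1 @ [(a, fst (snd ob))]) (sg @ [(\<kappa> sg, snd (snd ob))]))"
  have mixeq: "(lam * m1 + (1 - lam) * m2) * pm k h1 a = E a" for a
    unfolding m1_def m2_def pm_def E_def by (rule mixp_eq[OF P])
  have step: "E a * B pm a ob = lam * m1 * pol1 k h1 a * B pol1 a ob + (1 - lam) * m2 * pol2 k h1 a * B pol2 a ob" for a ob
  proof -
    have l: "length (h1 @ [(a, fst (snd ob))]) = Suc k" using Suc.prems by simp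
    have t: "t0 \<le> Suc k" using Suc.prems by simp
    have ih: "(lam * mu t0 pol1 (h1 @ [(a, fst (snd ob))]) + (1 - lam) * mu t0 pol2 (h1 @ [(a, fst (snd ob))])) * B pm a ob
       = lam * mu t0 pol1 (h1 @ [(a, fst (snd ob))]) * B pol1 a ob + (1 - lam) * mu t0 pol2 (h1 @ [(a, fst (snd ob))]) * B pol2 a ob"
      using Suc.IH[OF l t] unfolding B_def pm_def by simp
    have ms: "mu t0 pol (h1 @ [(a, fst (snd ob))]) = mu t0 pol h1 * pol k h1 a" for pol
      using mu_snoc[of t0 h1 pol a "fst (snd ob)"] Suc.prems by simp
    show ?thesis using ih unfolding ms E_def m1_def m2_def by (simp add: algebra_simps)
  qed
  have "(lam * m1 + (1 - lam) * m2) * A1 p r g pm \<kappa> (Suc n) k s h1 sg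
      = (\<Sum>a\<in>UNIV. ((lam * m1 + (1 - lam) * m2) * pm k h1 a) * (r s a (\<kappa> sg) + g * (\<Sum>ob\<in>UNIV. p s a (\<kappa> sg) ob * B pm a ob)))"
    by (simp add: sum_distrib_left B_def mult.assoc)
  also have "\<dots> = (\<Sum>a\<in>UNIV. E a * r s a (\<kappa> sg) + g * (\<Sum>ob\<in>UNIV. p s a (\<kappa> sg) ob * (E a * B pm a ob)))"
    by (simp only: mixeq) (simp add: algebra_simps sum_distrib_left)
  also have "\<dots> = (\<Sum>a\<in>UNIV. E a * r s a (\<kappa> sg) + g * (\<Sum>ob\<in>UNIV. p s a (\<kappa> sg) ob *
        (lam * m1 * pol1 k h1 a * B pol1 a ob + (1 - lam) * m2 * pol2 k h1 a * B pol2 a ob)))"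
    by (simp only: step)
  also have "\<dots> = (\<Sum>a\<in>UNIV. lam * m1 * (pol1 k h1 a * (r s a (\<kappa> sg) + g * (\<Sum>ob\<in>UNIV. p s a (\<kappa> sg) ob * B pol1 a ob)))
       + (1 - lam) * m2 * (pol2 k h1 a * (r s a (\<kappa> sg) + g * (\<Sum>ob\<in>UNIV. p s a (\<kappa> sg) ob * B pol2 a ob))))"
    by (rule sum.cong[OF refl]) (simp add: E_def sum.distrib sum_distrib_left sum_subtractf algebra_simps)
  also have "\<dots> = lam * m1 * A1 p r g pol1 \<kappa> (Suc n) k s h1 sg + (1 - lam) * m2 * A1 p r g pol2 \<kappa> (Suc n) k s h1 sg"
    by (simp only: sum.distrib sum_distrib_left[symmetric]) (simp add: B_def)
  finally show ?case by (simp add: m1_def m2_def pm_def)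
qed

lemma A1_mix_root:
  assumes P: "pol1 \<in> policies1" "pol2 \<in> policies1" "0 \<le> lam" "lam \<le> 1" and "length h1 = k"
  shows "A1 p r g (mixp k lam pol1 pol2) \<kappa> n k s h1 sg
    = lam * A1 p r g pol1 \<kappa> n k s h1 sg + (1 - lam) * A1 p r g pol2 \<kappa> n k s h1 sg"
  using A1_mix[OF P, of h1 k k p r g \<kappa> n s sg] assms(5) by (simp add: mu_base)




definition INF2 where
  "INF2 p r g n t x2 = (INF d2\<in>decision_rules. rho2 r t x2 d2 + g * V1 p r g n (Suc t) (tau2 p x2 d2))"

context
  fixes p :: "'s::finite \<Rightarrow> 'a1::finite \<Rightarrow> 'a2::finite \<Rightarrow> 's \<times> 'z1::finite \<times> 'z2::finite \<Rightarrow> real"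
    and r :: "'s \<Rightarrow> 'a1 \<Rightarrow> 'a2 \<Rightarrow> real"
    and g :: real
  assumes p_nonneg: "\<forall>s a1 a2 ob. 0 \<le> p s a1 a2 ob"
    and g_ge: "0 \<le> g"
begin

definition Yv :: "('s \<times> ('a1 \<times> 'z1) list \<times> ('a2 \<times> 'z2) list \<times> 'a1 \<Rightarrow> real) \<Rightarrow> ('a2 \<times> 'z2) list \<Rightarrow> 'a2 \<Rightarrow> 'z2
    \<Rightarrow> 's \<times> ('a1 \<times> 'z1) list \<Rightarrow> real" where
  "Yv x2 h2 a2 z2 = (\<lambda>(s', h1'). if h1' \<noteq> [] then
     (\<Sum>s\<in>UNIV. x2 (s, butlast h1', h2, fst (last h1')) * p s (fst (last h1')) a2 (s', snd (last h1'), z2)) else 0)"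

definition Rw :: "nat \<Rightarrow> ('s \<times> ('a1 \<times> 'z1) list \<times> ('a2 \<times> 'z2) list \<times> 'a1 \<Rightarrow> real) \<Rightarrow> ('a2 \<times> 'z2) list \<Rightarrow> 'a2 \<Rightarrow> real" where
  "Rw t x2 h2 a2 = (\<Sum>(s,h1,a1)\<in>UNIV \<times> hist t \<times> UNIV. x2 (s,h1,h2,a1) * r s a1 a2)"

definition L :: "nat \<Rightarrow> nat \<Rightarrow> ('s \<times> ('a1 \<times> 'z1) list \<Rightarrow> real) \<Rightarrow> (nat \<Rightarrow> ('a1 \<times> 'z1) list \<Rightarrow> 'a1 \<Rightarrow> real)
   \<Rightarrow> (('a2 \<times> 'z2) list \<Rightarrow> 'a2) \<Rightarrow> real" where
  "L n t y pol \<kappa> = (\<Sum>(s,h1)\<in>UNIV \<times> hist (Suc t). y (s,h1) * A1 p r g pol \<kappa> n (Suc t) s h1 [])"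

definition Q where
  "Q n t x2 pol h2 a2 = Rw t x2 h2 a2 + g * (\<Sum>z2\<in>UNIV. Min (range (\<lambda>\<kappa>. L n t (Yv x2 h2 a2 z2) pol \<kappa>)))"

lemma L_Rn: "L n t y pol (Rn n \<kappa>) = L n t y pol \<kappa>"
  by (simp add: L_def A1_Rn)

lemma finite_L: "finite (range (\<lambda>\<kappa>. L n t y pol \<kappa>))"
  by (rule finite_range_dep[where n=n]) (simp add: L_Rn)

lemma rho2_eq: "rho2 r t x2 d2 = (\<Sum>h2\<in>hist t. \<Sum>a2\<in>UNIV. d2 h2 a2 * Rw t x2 h2 a2)"
proof -
  have "rho2 r t x2 d2 = (\<Sum>s\<in>UNIV. \<Sum>h1\<in>hist t. \<Sum>h2\<in>hist t. \<Sum>a1\<in>UNIV. \<Sum>a2\<in>UNIV.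
           x2 (s,h1,h2,a1) * d2 h2 a2 * r s a1 a2)"
    unfolding rho2_def by (simp only: sum4)
  also have "\<dots> = (\<Sum>h2\<in>hist t. \<Sum>a2\<in>UNIV. \<Sum>s\<in>UNIV. \<Sum>h1\<in>hist t. \<Sum>a1\<in>UNIV.
           x2 (s,h1,h2,a1) * d2 h2 a2 * r s a1 a2)"
    by (rule perm5)
  also have "\<dots> = (\<Sum>h2\<in>hist t. \<Sum>a2\<in>UNIV. d2 h2 a2 * Rw t x2 h2 a2)"
    unfolding Rw_def sum3 by (simp add: sum_distrib_left mult_ac)
  finally show ?thesis .
qed

lemma tau2_snoc: "tau2 p x2 d2 (s, h1, h2 @ [(a2, z2)]) = d2 h2 a2 * Yv x2 h2 a2 z2 (s, h1)"
  by (simp add: tau2_def Yv_def sum_distrib_left mult_ac)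

lemma W1_tau2:
  assumes d: "\<forall>h a. 0 \<le> d2 h a"
  shows "W1 p r g n (Suc t) (tau2 p x2 d2) pol
       = (\<Sum>h2\<in>hist t. \<Sum>a2\<in>UNIV. d2 h2 a2 * (\<Sum>z2\<in>UNIV. Min (range (\<lambda>\<kappa>. L n t (Yv x2 h2 a2 z2) pol \<kappa>))))"
proof -
  have "W1 p r g n (Suc t) (tau2 p x2 d2) pol = (\<Sum>h2\<in>hist t. \<Sum>a2\<in>UNIV. \<Sum>z2\<in>UNIV.
      Min (range (\<lambda>\<kappa>. \<Sum>(s,h1)\<in>UNIV \<times> hist (Suc t). tau2 p x2 d2 (s,h1,h2 @ [(a2,z2)]) * A1 p r g pol \<kappa> n (Suc t) s h1 [])))"
    unfolding W1_def by (rule sum_hist_Suc)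
  also have "\<dots> = (\<Sum>h2\<in>hist t. \<Sum>a2\<in>UNIV. \<Sum>z2\<in>UNIV.
      Min (range (\<lambda>\<kappa>. d2 h2 a2 * L n t (Yv x2 h2 a2 z2) pol \<kappa>)))"
    by (simp add: tau2_snoc L_def sum_distrib_left mult_ac case_prod_beta)
  also have "\<dots> = (\<Sum>h2\<in>hist t. \<Sum>a2\<in>UNIV. \<Sum>z2\<in>UNIV.
      d2 h2 a2 * Min (range (\<lambda>\<kappa>. L n t (Yv x2 h2 a2 z2) pol \<kappa>)))"
    using d by (simp add: Min_scale finite_L)
  finally show ?thesis by (simp add: sum_distrib_left)
qed

lemma claimA:
  assumes d: "\<forall>h a. 0 \<le> d2 h a"
  shows "rho2 r t x2 d2 + g * W1 p r g n (Suc t) (tau2 p x2 d2) pol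
       = (\<Sum>h2\<in>hist t. \<Sum>a2\<in>UNIV. d2 h2 a2 * Q n t x2 pol h2 a2)"
  unfolding rho2_eq W1_tau2[OF d] Q_def
  by (simp add: sum_distrib_left sum.distrib[symmetric] algebra_simps)


lemma A1_shift1: "A1 p r g pol \<kappa> n k s h1 [e] = A1 p r g pol (\<lambda>sg'. \<kappa> (e # sg')) n k s h1 []"
  using A1_shift[of p r g pol \<kappa> n k s h1 "[e]" "[]"] by simp

lemma claimB1:
  "(\<Sum>(s,h1,a1)\<in>UNIV \<times> hist t \<times> UNIV. x2 (s,h1,h2,a1) * A2 p r g pol \<kappa> n t s h1 a1 [])
   = Rw t x2 h2 (\<kappa> []) + g * (\<Sum>z2\<in>UNIV. L n t (Yv x2 h2 (\<kappa> []) z2) pol (\<lambda>sg. \<kappa> ((\<kappa> [], z2) # sg)))"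
proof -
  define a2 where "a2 = \<kappa> []"
  define K where "K = (\<lambda>z2 sg. \<kappa> ((a2, z2) # sg))"
  define B where "B = (\<lambda>z2 s' h'. A1 p r g pol (K z2) n (Suc t) s' h' [])"
  have A2e: "A2 p r g pol \<kappa> n t s h1 a1 [] = r s a1 a2 + g * (\<Sum>s'\<in>UNIV. \<Sum>z1\<in>UNIV. \<Sum>z2\<in>UNIV.
      p s a1 a2 (s', z1, z2) * B z2 s' (h1 @ [(a1, z1)]))" for s h1 a1
    unfolding A2_def by (simp add: sum_UNIV3 A1_shift1 a2_def K_def B_def)
  have "(\<Sum>(s,h1,a1)\<in>UNIV \<times> hist t \<times> UNIV. x2 (s,h1,h2,a1) * A2 p r g pol \<kappa> n t s h1 a1 [])
      = Rw t x2 h2 a2 + g * (\<Sum>s\<in>UNIV. \<Sum>h1\<in>hist t. \<Sum>a1\<in>UNIV. \<Sum>s'\<in>UNIV. \<Sum>z1\<in>UNIV. \<Sum>z2\<in>UNIV.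
           x2 (s,h1,h2,a1) * (p s a1 a2 (s', z1, z2) * B z2 s' (h1 @ [(a1, z1)])))"
    unfolding Rw_def sum3 A2e
    by (simp add: sum.distrib sum_distrib_left algebra_simps)
  also have "(\<Sum>s\<in>UNIV. \<Sum>h1\<in>hist t. \<Sum>a1\<in>UNIV. \<Sum>s'\<in>UNIV. \<Sum>z1\<in>UNIV. \<Sum>z2\<in>UNIV.
           x2 (s,h1,h2,a1) * (p s a1 a2 (s', z1, z2) * B z2 s' (h1 @ [(a1, z1)])))
     = (\<Sum>z2\<in>UNIV. \<Sum>s'\<in>UNIV. \<Sum>h1\<in>hist t. \<Sum>a1\<in>UNIV. \<Sum>z1\<in>UNIV. \<Sum>s\<in>UNIV.
           x2 (s,h1,h2,a1) * (p s a1 a2 (s', z1, z2) * B z2 s' (h1 @ [(a1, z1)])))"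
    by (rule perm6)
  also have "\<dots> = (\<Sum>z2\<in>UNIV. L n t (Yv x2 h2 a2 z2) pol (K z2))"
  proof (rule sum.cong[OF refl])
    fix z2
    have "L n t (Yv x2 h2 a2 z2) pol (K z2) = (\<Sum>s'\<in>UNIV. \<Sum>h'\<in>hist (Suc t). Yv x2 h2 a2 z2 (s', h') * B z2 s' h')"
      unfolding L_def B_def by (simp only: sum2)
    also have "\<dots> = (\<Sum>s'\<in>UNIV. \<Sum>h1\<in>hist t. \<Sum>a1\<in>UNIV. \<Sum>z1\<in>UNIV.
        Yv x2 h2 a2 z2 (s', h1 @ [(a1, z1)]) * B z2 s' (h1 @ [(a1, z1)]))"
      by (simp only: sum_hist_Suc)
    also have "\<dots> = (\<Sum>s'\<in>UNIV. \<Sum>h1\<in>hist t. \<Sum>a1\<in>UNIV. \<Sum>z1\<in>UNIV. \<Sum>s\<in>UNIV.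
           x2 (s,h1,h2,a1) * (p s a1 a2 (s', z1, z2) * B z2 s' (h1 @ [(a1, z1)])))"
      by (simp add: Yv_def sum_distrib_right sum_distrib_left mult_ac)
    finally show "(\<Sum>s'\<in>UNIV. \<Sum>h1\<in>hist t. \<Sum>a1\<in>UNIV. \<Sum>z1\<in>UNIV. \<Sum>s\<in>UNIV.
           x2 (s,h1,h2,a1) * (p s a1 a2 (s', z1, z2) * B z2 s' (h1 @ [(a1, z1)])))
        = L n t (Yv x2 h2 a2 z2) pol (K z2)" by simp
  qed
  finally show ?thesis by (simp add: a2_def K_def)
qed

lemma finite_S2: "finite (range (\<lambda>\<kappa>. \<Sum>(s,h1,a1)\<in>UNIV \<times> hist t \<times> UNIV. x2 (s,h1,h2,a1) * A2 p r g pol \<kappa> n t s h1 a1 []))"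
  by (rule finite_range_dep[where n="Suc n"]) (simp add: A2_Rn)

lemma claimB_h2:
  "Min (range (\<lambda>\<kappa>. \<Sum>(s,h1,a1)\<in>UNIV \<times> hist t \<times> UNIV. x2 (s,h1,h2,a1) * A2 p r g pol \<kappa> n t s h1 a1 []))
   = Min (range (\<lambda>a2. Q n t x2 pol h2 a2))"
proof -
  define m where "m = (\<lambda>a2. Q n t x2 pol h2 a2)"
  have fm: "finite (range m)" by simp
  obtain as where as: "Min (range m) = m as" using Min_range_ex[OF fm] by blast
  have "\<forall>z. \<exists>\<kappa>'. Min (range (\<lambda>\<kappa>. L n t (Yv x2 h2 as z) pol \<kappa>)) = L n t (Yv x2 h2 as z) pol \<kappa>'"
    using Min_range_ex[OF finite_L] by blast
  then obtain K where K: "\<And>z. Min (range (\<lambda>\<kappa>. L n t (Yv x2 h2 as z) pol \<kappa>)) = L n t (Yv x2 h2 as z) pol (K z)"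
    using choice by metis
  define \<kappa>0 where "\<kappa>0 = (\<lambda>sg. case sg of [] \<Rightarrow> as | e # sg' \<Rightarrow> K (snd e) sg')"
  have k0: "\<kappa>0 [] = as" by (simp add: \<kappa>0_def)
  have k1: "(\<lambda>sg. \<kappa>0 ((as, z) # sg)) = K z" for z by (simp add: \<kappa>0_def)
  show ?thesis unfolding m_def[symmetric]
  proof (rule Min_range_eqI[OF finite_S2])
    fix \<kappa> :: "('a2 \<times> 'z2) list \<Rightarrow> 'a2"
    have "Min (range m) \<le> m (\<kappa> [])" using fm by (rule Min_range_le)
    also have "m (\<kappa> []) \<le> Rw t x2 h2 (\<kappa> []) + g * (\<Sum>z2\<in>UNIV. L n t (Yv x2 h2 (\<kappa> []) z2) pol (\<lambda>sg. \<kappa> ((\<kappa> [], z2) # sg)))"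
      unfolding m_def Q_def
      by (intro add_left_mono mult_left_mono g_ge sum_mono Min_range_le finite_L)
    finally show "Min (range m) \<le> (\<Sum>(s,h1,a1)\<in>UNIV \<times> hist t \<times> UNIV. x2 (s,h1,h2,a1) * A2 p r g pol \<kappa> n t s h1 a1 [])"
      by (simp only: claimB1)
  next
    show "(\<Sum>(s,h1,a1)\<in>UNIV \<times> hist t \<times> UNIV. x2 (s,h1,h2,a1) * A2 p r g pol \<kappa>0 n t s h1 a1 []) = Min (range m)"
      by (simp only: claimB1 k0 k1 as) (simp add: m_def Q_def K)
  qed
qed

lemma claimB: "W2 p r g n t x2 pol = (\<Sum>h2\<in>hist t. Min (range (\<lambda>a2. Q n t x2 pol h2 a2)))"
  unfolding W2_def by (simp only: claimB_h2)


lemma L_mix: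
  assumes P: "pol1 \<in> policies1" "pol2 \<in> policies1" "0 \<le> lam" "lam \<le> 1"
  shows "L n t y (mixp (Suc t) lam pol1 pol2) \<kappa> = lam * L n t y pol1 \<kappa> + (1 - lam) * L n t y pol2 \<kappa>"
proof -
  have "L n t y (mixp (Suc t) lam pol1 pol2) \<kappa>
      = (\<Sum>(s,h1)\<in>UNIV \<times> hist (Suc t). lam * (y (s,h1) * A1 p r g pol1 \<kappa> n (Suc t) s h1 [])
           + (1 - lam) * (y (s,h1) * A1 p r g pol2 \<kappa> n (Suc t) s h1 []))"
    unfolding L_def
    by (rule sum.cong[OF refl]) (auto simp: A1_mix_root[OF P] hist_def algebra_simps)
  also have "\<dots> = lam * L n t y pol1 \<kappa> + (1 - lam) * L n t y pol2 \<kappa>"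
    unfolding L_def by (simp add: sum.distrib sum_distrib_left case_prod_beta)
  finally show ?thesis .
qed

lemma Q_mix:
  assumes P: "pol1 \<in> policies1" "pol2 \<in> policies1" "0 \<le> lam" "lam \<le> 1"
  shows "lam * Q n t x2 pol1 h2 a2 + (1 - lam) * Q n t x2 pol2 h2 a2 \<le> Q n t x2 (mixp (Suc t) lam pol1 pol2) h2 a2"
proof -
  define M where "M = (\<lambda>pol z2. Min (range (\<lambda>\<kappa>. L n t (Yv x2 h2 a2 z2) pol \<kappa>)))"
  have Mm: "lam * M pol1 z + (1 - lam) * M pol2 z \<le> M (mixp (Suc t) lam pol1 pol2) z" for z
  proof -
    obtain k where k: "M (mixp (Suc t) lam pol1 pol2) z = L n t (Yv x2 h2 a2 z) (mixp (Suc t) lam pol1 pol2) k"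
      unfolding M_def using Min_range_ex[OF finite_L] by blast
    have "lam * M pol1 z \<le> lam * L n t (Yv x2 h2 a2 z) pol1 k"
      unfolding M_def using P by (intro mult_left_mono Min_range_le finite_L) auto
    moreover have "(1 - lam) * M pol2 z \<le> (1 - lam) * L n t (Yv x2 h2 a2 z) pol2 k"
      unfolding M_def using P by (intro mult_left_mono Min_range_le finite_L) auto
    ultimately show ?thesis using k L_mix[OF P] by simp
  qed
  have "lam * Q n t x2 pol1 h2 a2 + (1 - lam) * Q n t x2 pol2 h2 a2
     = Rw t x2 h2 a2 + g * (\<Sum>z\<in>UNIV. lam * M pol1 z + (1 - lam) * M pol2 z)"
    unfolding Q_def M_def by (simp add: sum.distrib sum_distrib_left sum_subtractf algebra_simps)
  also have "\<dots> \<le> Rw t x2 h2 a2 + g * (\<Sum>z\<in>UNIV. M (mixp (Suc t) lam pol1 pol2) z)"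
    by (intro add_left_mono mult_left_mono g_ge sum_mono Mm)
  also have "\<dots> = Q n t x2 (mixp (Suc t) lam pol1 pol2) h2 a2"
    unfolding Q_def M_def ..
  finally show ?thesis .
qed


lemma tau2_nonneg:
  assumes "\<forall>w. 0 \<le> x2 w" "d2 \<in> decision_rules"
  shows "\<forall>w. 0 \<le> tau2 p x2 d2 w"
proof
  fix w :: "'s \<times> ('a1 \<times> 'z1) list \<times> ('a2 \<times> 'z2) list"
  obtain s' h1 h2 where w: "w = (s', h1, h2)" by (cases w) auto
  have "0 \<le> d2 h a" for h a using assms(2) by (simp add: decision_rules_def)
  then show "0 \<le> tau2 p x2 d2 w"
    unfolding w tau2_def using assms(1) p_nonneg
    by (auto intro!: sum_nonneg mult_nonneg_nonneg)
qed

lemma tau1_nonneg: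
  fixes x :: "'s \<times> ('a1 \<times> 'z1) list \<times> ('a2 \<times> 'z2) list \<Rightarrow> real" and d1 :: "('a1 \<times> 'z1) list \<Rightarrow> 'a1 \<Rightarrow> real"
  assumes "\<forall>w. 0 \<le> x w" "d1 \<in> decision_rules"
  shows "\<forall>w. 0 \<le> tau1 x d1 w"
proof
  fix w :: "'s \<times> ('a1 \<times> 'z1) list \<times> ('a2 \<times> 'z2) list \<times> 'a1"
  obtain s h1 h2 a1 where w: "w = (s, h1, h2, a1)" by (cases w) auto
  have "0 \<le> d1 h a" for h a using assms(2) by (simp add: decision_rules_def)
  then show "0 \<le> tau1 x d1 w"
    unfolding w tau1_def using assms(1) by (auto intro!: mult_nonneg_nonneg)
qed

lemma sum_d_Q_ge:
  assumes "d \<in> decision_rules"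
  shows "Min (range (\<lambda>a. q h a)) \<le> (\<Sum>a\<in>UNIV. d h a * (q h a :: real))"
proof -
  have d: "\<forall>a. 0 \<le> d h a" "sum (d h) UNIV = 1" using assms by (auto simp: decision_rules_def)
  have "Min (range (\<lambda>a. q h a)) = (\<Sum>a\<in>UNIV. d h a * Min (range (\<lambda>a. q h a)))"
    using d by (simp add: sum_distrib_right[symmetric])
  also have "\<dots> \<le> (\<Sum>a\<in>UNIV. d h a * q h a)"
    using d by (intro sum_mono mult_left_mono Min_range_le) auto
  finally show ?thesis .
qed


lemma level2:
  assumes IH: "\<forall>y. (\<forall>w. 0 \<le> y w) \<longrightarrow> (\<exists>pol\<in>policies1. V1 p r g n (Suc t) y = W1 p r g n (Suc t) y pol)
                 \<and> (\<forall>pol\<in>policies1. W1 p r g n (Suc t) y pol \<le> V1 p r g n (Suc t) y)"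
    and x2: "\<forall>w. 0 \<le> x2 w"
  shows "\<exists>pol\<in>policies1. INF2 p r g n t x2 = W2 p r g n t x2 pol \<and> (\<forall>pol'\<in>policies1. W2 p r g n t x2 pol' \<le> W2 p r g n t x2 pol)"
proof -
  obtain ps where ps: "ps \<in> policies1" "\<forall>pol'\<in>policies1. W2 p r g n t x2 pol' \<le> W2 p r g n t x2 ps"
    using att[OF W2_cont] by blast
  define vv where "vv = W2 p r g n t x2 ps"
  define G where "G = (\<lambda>d2. rho2 r t x2 d2 + g * V1 p r g n (Suc t) (tau2 p x2 d2))"
  have dnn: "\<forall>h a. 0 \<le> d2 h a" if "d2 \<in> decision_rules" for d2 :: "('a2 \<times> 'z2) list \<Rightarrow> 'a2 \<Rightarrow> real"
    using that by (simp add: decision_rules_def)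
  have ge: "vv \<le> G d2" if d2: "d2 \<in> decision_rules" for d2
  proof -
    have "W1 p r g n (Suc t) (tau2 p x2 d2) ps \<le> V1 p r g n (Suc t) (tau2 p x2 d2)"
      using IH tau2_nonneg[OF x2 d2] ps(1) by blast
    then have "rho2 r t x2 d2 + g * W1 p r g n (Suc t) (tau2 p x2 d2) ps \<le> G d2"
      unfolding G_def using g_ge by (simp add: mult_left_mono)
    moreover have "rho2 r t x2 d2 + g * W1 p r g n (Suc t) (tau2 p x2 d2) ps
        = (\<Sum>h2\<in>hist t. \<Sum>a2\<in>UNIV. d2 h2 a2 * Q n t x2 ps h2 a2)"
      by (rule claimA[OF dnn[OF d2]])
    moreover have "vv \<le> (\<Sum>h2\<in>hist t. \<Sum>a2\<in>UNIV. d2 h2 a2 * Q n t x2 ps h2 a2)"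
      unfolding vv_def claimB by (intro sum_mono sum_d_Q_ge[OF d2])
    ultimately show ?thesis by linarith
  qed
  define CH where "CH = PiE (hist t :: ('a2 \<times> 'z2) list set) (\<lambda>_. UNIV :: 'a2 set)"
  have finCH: "finite CH" unfolding CH_def by (intro finite_PiE) (auto simp: finite_hist)
  have neCH: "CH \<noteq> {}" unfolding CH_def by (simp add: PiE_eq_empty_iff)
  define f where "f = (\<lambda>c pol. \<Sum>h\<in>hist t. Q n t x2 pol h (c h))"
  have cl: "\<forall>y1\<in>policies1. \<forall>y2\<in>policies1. \<forall>\<mu>. 0 \<le> \<mu> \<and> \<mu> \<le> 1 \<longrightarrow>
       (\<exists>y3\<in>policies1. \<forall>c\<in>CH. \<mu> * f c y1 + (1 - \<mu>) * f c y2 \<le> f c y3)"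
  proof (intro ballI allI impI)
    fix y1 y2 :: "nat \<Rightarrow> ('a1 \<times> 'z1) list \<Rightarrow> 'a1 \<Rightarrow> real" and \<mu> :: real
    assume y: "y1 \<in> policies1" "y2 \<in> policies1" and m: "0 \<le> \<mu> \<and> \<mu> \<le> 1"
    show "\<exists>y3\<in>policies1. \<forall>c\<in>CH. \<mu> * f c y1 + (1 - \<mu>) * f c y2 \<le> f c y3"
    proof (intro bexI ballI)
      show "mixp (Suc t) \<mu> y1 y2 \<in> policies1" using mixp_pol y m by blast
      fix c
      have "\<mu> * f c y1 + (1 - \<mu>) * f c y2 = (\<Sum>h\<in>hist t. \<mu> * Q n t x2 y1 h (c h) + (1 - \<mu>) * Q n t x2 y2 h (c h))"
        unfolding f_def by (simp add: sum.distrib sum_distrib_left)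
      also have "\<dots> \<le> f c (mixp (Suc t) \<mu> y1 y2)"
        unfolding f_def using y m by (intro sum_mono Q_mix) auto
      finally show "\<mu> * f c y1 + (1 - \<mu>) * f c y2 \<le> f c (mixp (Suc t) \<mu> y1 y2)" .
    qed
  qed
  have hyp: "\<forall>pol\<in>policies1. \<exists>c\<in>CH. f c pol \<le> vv"
  proof
    fix pol :: "nat \<Rightarrow> ('a1 \<times> 'z1) list \<Rightarrow> 'a1 \<Rightarrow> real" assume pol: "pol \<in> policies1"
    define c where "c = restrict (\<lambda>h. SOME a. Q n t x2 pol h a = Min (range (\<lambda>a. Q n t x2 pol h a))) (hist t)"
    have cm: "Q n t x2 pol h (c h) = Min (range (\<lambda>a. Q n t x2 pol h a))" if "h \<in> hist t" for h
    proof -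
      have ex: "\<exists>a. Q n t x2 pol h a = Min (range (\<lambda>a. Q n t x2 pol h a))"
        using Min_range_ex[of "\<lambda>a. Q n t x2 pol h a"] by auto
      have "c h = (SOME a. Q n t x2 pol h a = Min (range (\<lambda>a. Q n t x2 pol h a)))"
        using that by (simp add: c_def)
      then show ?thesis using someI_ex[OF ex] by simp
    qed
    have "c \<in> CH" by (simp add: c_def CH_def)
    moreover have "f c pol = W2 p r g n t x2 pol"
      unfolding f_def claimB by (rule sum.cong[OF refl]) (simp add: cm)
    ultimately show "\<exists>c\<in>CH. f c pol \<le> vv" using ps(2) pol unfolding vv_def by (intro bexI[of _ c]) auto
  qed
  obtain q where q: "\<forall>c\<in>CH. 0 \<le> q c" "sum q CH = 1" "\<forall>pol\<in>policies1. (\<Sum>c\<in>CH. q c * f c pol) \<le> vv"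
    using fan[OF finCH neCH cl hyp] by blast
  define ds where "ds = (\<lambda>h a. \<Sum>c\<in>CH. if c h = a then q c else 0)"
  have ds: "ds \<in> decision_rules"
  proof -
    have "0 \<le> ds h a" for h a unfolding ds_def using q(1) by (auto intro!: sum_nonneg)
    moreover have "sum (ds h) UNIV = 1" for h
    proof -
      have "sum (ds h) UNIV = (\<Sum>c\<in>CH. \<Sum>a\<in>UNIV. if c h = a then q c else 0)"
        unfolding ds_def by (rule sum.swap)
      also have "\<dots> = (\<Sum>c\<in>CH. q c)" by simp
      finally show ?thesis using q(2) by simp
    qed
    ultimately show ?thesis by (simp add: decision_rules_def)
  qed
  obtain py where py: "py \<in> policies1" "V1 p r g n (Suc t) (tau2 p x2 ds) = W1 p r g n (Suc t) (tau2 p x2 ds) py"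
    using IH tau2_nonneg[OF x2 ds] by blast
  have "G ds = (\<Sum>h2\<in>hist t. \<Sum>a2\<in>UNIV. ds h2 a2 * Q n t x2 py h2 a2)"
    unfolding G_def py(2) by (rule claimA[OF dnn[OF ds]])
  also have "\<dots> = (\<Sum>h2\<in>hist t. \<Sum>c\<in>CH. q c * Q n t x2 py h2 (c h2))"
  proof (rule sum.cong[OF refl])
    fix h2
    have "(\<Sum>a2\<in>UNIV. ds h2 a2 * Q n t x2 py h2 a2) = (\<Sum>a2\<in>UNIV. \<Sum>c\<in>CH. if c h2 = a2 then q c * Q n t x2 py h2 a2 else 0)"
      unfolding ds_def sum_distrib_right by (intro sum.cong refl) simp
    also have "\<dots> = (\<Sum>c\<in>CH. \<Sum>a2\<in>UNIV. if c h2 = a2 then q c * Q n t x2 py h2 a2 else 0)"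
      by (rule sum.swap)
    also have "\<dots> = (\<Sum>c\<in>CH. q c * Q n t x2 py h2 (c h2))" by simp
    finally show "(\<Sum>a2\<in>UNIV. ds h2 a2 * Q n t x2 py h2 a2) = (\<Sum>c\<in>CH. q c * Q n t x2 py h2 (c h2))" .
  qed
  also have "\<dots> = (\<Sum>c\<in>CH. q c * f c py)"
    unfolding f_def by (subst sum.swap) (simp add: sum_distrib_left)
  also have "\<dots> \<le> vv" using q(3) py(1) by blast
  finally have le: "G ds \<le> vv" .
  have "INF2 p r g n t x2 = vv"
    unfolding INF2_def G_def[symmetric]
  proof (rule cInf_eq_minimum)
    show "vv \<in> G ` decision_rules" using le ge[OF ds] ds by (intro image_eqI[of _ _ ds]) auto
    show "\<And>y. y \<in> G ` decision_rules \<Longrightarrow> vv \<le> y" using ge by auto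
  qed
  then show ?thesis using ps unfolding vv_def by blast
qed

lemma level1_Suc:
  assumes L2: "\<forall>x2. (\<forall>w. 0 \<le> x2 w) \<longrightarrow> (\<exists>pol\<in>policies1. INF2 p r g n t x2 = W2 p r g n t x2 pol
                  \<and> (\<forall>pol'\<in>policies1. W2 p r g n t x2 pol' \<le> W2 p r g n t x2 pol))"
    and x: "\<forall>w. 0 \<le> x w"
  shows "(\<exists>pol\<in>policies1. V1 p r g (Suc n) t x = W1 p r g (Suc n) t x pol)
       \<and> (\<forall>pol\<in>policies1. W1 p r g (Suc n) t x pol \<le> V1 p r g (Suc n) t x)"
proof -
  obtain ps where ps: "ps \<in> policies1" "\<forall>pol'\<in>policies1. W1 p r g (Suc n) t x pol' \<le> W1 p r g (Suc n) t x ps"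
    using att[OF W1_cont] by blast
  define W where "W = W1 p r g (Suc n) t x ps"
  have V: "V1 p r g (Suc n) t x = (SUP d1\<in>decision_rules. INF2 p r g n t (tau1 x d1))"
    by (simp add: INF2_def)
  have le: "INF2 p r g n t (tau1 x d1) \<le> W" if d1: "d1 \<in> decision_rules" for d1
  proof -
    obtain pol' where pol': "pol' \<in> policies1" "INF2 p r g n t (tau1 x d1) = W2 p r g n t (tau1 x d1) pol'"
      using L2 tau1_nonneg[OF x d1] by blast
    define pol'' where "pol'' = pol'(t := d1)"
    have pp: "pol'' \<in> policies1" using pol'(1) d1 by (simp add: pol''_def policies1_def)
    have "W2 p r g n t (tau1 x d1) pol' = W2 p r g n t (tau1 x d1) pol''"
      by (rule W2_pol_cong) (simp add: pol''_def)
    also have "\<dots> = W1 p r g (Suc n) t x pol''" by (simp add: W1_Suc pol''_def)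
    also have "\<dots> \<le> W" using ps(2) pp by (simp add: W_def)
    finally show ?thesis using pol'(2) by simp
  qed
  have d0: "ps t \<in> decision_rules" using ps(1) by (simp add: policies1_def)
  have ge: "W \<le> INF2 p r g n t (tau1 x (ps t))"
  proof -
    obtain pol' where pol': "pol' \<in> policies1" "INF2 p r g n t (tau1 x (ps t)) = W2 p r g n t (tau1 x (ps t)) pol'"
        "\<forall>pol''\<in>policies1. W2 p r g n t (tau1 x (ps t)) pol'' \<le> W2 p r g n t (tau1 x (ps t)) pol'"
      using L2 tau1_nonneg[OF x d0] by blast
    have "W = W2 p r g n t (tau1 x (ps t)) ps" by (simp add: W_def W1_Suc)
    also have "\<dots> \<le> INF2 p r g n t (tau1 x (ps t))" using pol'(2,3) ps(1) by simp
    finally show ?thesis .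
  qed
  have "V1 p r g (Suc n) t x = W"
    unfolding V
  proof (rule cSup_eq_maximum)
    show "W \<in> (\<lambda>d1. INF2 p r g n t (tau1 x d1)) ` decision_rules"
      using le[OF d0] ge d0 by (intro image_eqI[of _ _ "ps t"]) auto
    show "\<And>y. y \<in> (\<lambda>d1. INF2 p r g n t (tau1 x d1)) ` decision_rules \<Longrightarrow> y \<le> W" using le by auto
  qed
  then show ?thesis using ps unfolding W_def by auto
qed

lemma level1_0:
  "(\<exists>pol\<in>policies1. V1 p r g 0 t x = W1 p r g 0 t x pol) \<and> (\<forall>pol\<in>policies1. W1 p r g 0 t x pol \<le> V1 p r g 0 t x)"
  using policies1_ne by (auto simp: W1_def)

lemma main_levels:
  "\<forall>t x. (\<forall>w. 0 \<le> x w) \<longrightarrow> (\<exists>pol\<in>policies1. V1 p r g n t x = W1 p r g n t x pol)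
        \<and> (\<forall>pol\<in>policies1. W1 p r g n t x pol \<le> V1 p r g n t x)"
proof (induction n)
  case 0
  then show ?case using level1_0 by blast
next
  case (Suc n)
  show ?case
  proof (intro allI impI)
    fix t x assume x: "\<forall>w. 0 \<le> (x :: 's \<times> ('a1 \<times> 'z1) list \<times> ('a2 \<times> 'z2) list \<Rightarrow> real) w"
    have "\<forall>x2. (\<forall>w. 0 \<le> x2 w) \<longrightarrow> (\<exists>pol\<in>policies1. INF2 p r g n t x2 = W2 p r g n t x2 pol
                  \<and> (\<forall>pol'\<in>policies1. W2 p r g n t x2 pol' \<le> W2 p r g n t x2 pol))"
      using level2 Suc.IH by blast
    then show "(\<exists>pol\<in>policies1. V1 p r g (Suc n) t x = W1 p r g (Suc n) t x pol)
        \<and> (\<forall>pol\<in>policies1. W1 p r g (Suc n) t x pol \<le> V1 p r g (Suc n) t x)"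
      using level1_Suc x by blast
  qed
qed

end


theorem theorem4p1:
  fixes p :: "'s::finite \<Rightarrow> 'a1::finite \<Rightarrow> 'a2::finite \<Rightarrow> 's \<times> 'z1::finite \<times> 'z2::finite \<Rightarrow> real"
    and r :: "'s \<Rightarrow> 'a1 \<Rightarrow> 'a2 \<Rightarrow> real"
    and g :: real and l t :: nat
  assumes p_nonneg: "\<forall>s a1 a2 ob. 0 \<le> p s a1 a2 ob"
    and p_sum: "\<forall>s a1 a2. (\<Sum>ob\<in>UNIV. p s a1 a2 ob) = 1"
    and g_ge: "0 \<le> g" and g_lt: "g < 1"
    and t_lt: "t < l"
  shows "(\<forall>x\<in>(occ1 t :: ('s \<times> ('a1 \<times> 'z1) list \<times> ('a2 \<times> 'z2) list \<Rightarrow> real) set).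
            (\<exists>G\<in>Gamma1_1 p r g l t. Val1 t G x = vseq1 p r g l t x)
          \<and> (\<forall>G\<in>Gamma1_1 p r g l t. Val1 t G x \<le> vseq1 p r g l t x))
       \<and> (\<forall>x\<in>(occ2 t :: ('s \<times> ('a1 \<times> 'z1) list \<times> ('a2 \<times> 'z2) list \<times> 'a1 \<Rightarrow> real) set).
            (\<exists>G\<in>Gamma1_2 p r g l t. Val2 t G x = vseq2 p r g l t x)
          \<and> (\<forall>G\<in>Gamma1_2 p r g l t. Val2 t G x \<le> vseq2 p r g l t x))"
proof -
  have MLev: "\<forall>t x. (\<forall>w. 0 \<le> x w) \<longrightarrow> (\<exists>pol\<in>policies1. V1 p r g n t x = W1 p r g n t x pol)
        \<and> (\<forall>pol\<in>policies1. W1 p r g n t x pol \<le> V1 p r g n t x)" for n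
    by (rule main_levels[OF p_nonneg g_ge])
  have G1: "Val1 t (Gamma2_1 p r g l t pol) x = W1 p r g (l - t) t x pol"
    for pol and x :: "'s \<times> ('a1 \<times> 'z1) list \<times> ('a2 \<times> 'z2) list \<Rightarrow> real"
  proof -
    have "Gamma2_1 p r g l t pol = range (\<lambda>\<kappa>. \<lambda>(s,h1). A1 p r g pol \<kappa> (l - t) t s h1 [])"
      unfolding Gamma2_1_def by (simp add: alpha1_def[abs_def])
    then show ?thesis by (simp add: Val1_eq)
  qed
  have G2: "Val2 t (Gamma2_2 p r g l t pol) x = W2 p r g (l - Suc t) t x pol"
    for pol and x :: "'s \<times> ('a1 \<times> 'z1) list \<times> ('a2 \<times> 'z2) list \<times> 'a1 \<Rightarrow> real"
  proof -
    have "Gamma2_2 p r g l t pol = range (\<lambda>\<kappa>. \<lambda>(s,h1,a1). A2 p r g pol \<kappa> (l - Suc t) t s h1 a1 [])"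
      unfolding Gamma2_2_def by (simp add: alpha2_def[abs_def])
    then show ?thesis by (simp add: Val2_eq)
  qed
  show ?thesis
  proof (intro conjI ballI)
    fix x :: "'s \<times> ('a1 \<times> 'z1) list \<times> ('a2 \<times> 'z2) list \<Rightarrow> real"
    assume "x \<in> occ1 t"
    then have xn: "\<forall>w. 0 \<le> x w" by (simp add: occ1_def)
    obtain pol where pol: "pol \<in> policies1" "V1 p r g (l - t) t x = W1 p r g (l - t) t x pol"
        "\<forall>pol\<in>policies1. W1 p r g (l - t) t x pol \<le> V1 p r g (l - t) t x"
      using MLev[of "l - t"] xn by blast
    show "\<exists>G\<in>Gamma1_1 p r g l t. Val1 t G x = vseq1 p r g l t x"
      using pol unfolding Gamma1_1_def vseq1_def
      by (intro bexI[of _ "Gamma2_1 p r g l t pol"]) (simp_all add: G1)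
    show "Val1 t G x \<le> vseq1 p r g l t x" if "G \<in> Gamma1_1 p r g l t" for G
      using that pol unfolding Gamma1_1_def vseq1_def by (auto simp: G1)
  next
    fix x :: "'s \<times> ('a1 \<times> 'z1) list \<times> ('a2 \<times> 'z2) list \<times> 'a1 \<Rightarrow> real"
    assume "x \<in> occ2 t"
    then have xn: "\<forall>w. 0 \<le> x w" by (simp add: occ2_def)
    have V: "vseq2 p r g l t x = INF2 p r g (l - Suc t) t x"
      unfolding vseq2_def INF2_def by (rule refl)
    obtain pol where pol: "pol \<in> policies1" "INF2 p r g (l - Suc t) t x = W2 p r g (l - Suc t) t x pol"
        "\<forall>pol'\<in>policies1. W2 p r g (l - Suc t) t x pol' \<le> W2 p r g (l - Suc t) t x pol"
      using level2[OF p_nonneg g_ge spec[OF MLev[of "l - Suc t"], of "Suc t"] xn] by blast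
    show "\<exists>G\<in>Gamma1_2 p r g l t. Val2 t G x = vseq2 p r g l t x"
      using pol unfolding Gamma1_2_def V
      by (intro bexI[of _ "Gamma2_2 p r g l t pol"]) (simp_all add: G2)
    show "Val2 t G x \<le> vseq2 p r g l t x" if "G \<in> Gamma1_2 p r g l t" for G
      using that pol unfolding Gamma1_2_def V by (auto simp: G2)
  qed
qed

end
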